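(* (i) The event $\{\widehat E^{(k)}=E^{(k)},\ \widehat S^{(k)}=S^{(k)},\ \widehat Z^{(k)}=Z^{(k)}\text{ for all }k\in[K]\}$ equals the event $\{\operatorname{sign}(\sqrt n\widehat B)=S,\ \widehat Z=Z\}$. (ii) Assume (R), (A1), (A2) and (A3). Take for $\sqrt n(\widehat\beta_E-\beta_{E,n},\widehat\beta^\perp_{-E},\Omega)$ its limiting Gaussian law $\mathcal{N}(\mathbf 0,\operatorname{blockdiag}(\mathcal{I}_{E,E}^{-1},\mathcal{I}/\mathcal{I}_{E,E},\Sigma_\Omega))$, and change variables from $\sqrt n\Omega$ to $(\sqrt n\widehat B,\widehat Z)$ through the linear map $\sqrt n\Omega\mapsto-\mathbb{Q}_1\sqrt n\widehat\beta_E+\mathbb{Q}_2\sqrt n\widehat B+\mathbf r$. Then the resulting (asymptotic) conditional density of $(\sqrt n\widehat\beta_E,\sqrt n\widehat B)$ given $\widehat Z=Z$ (and given $\widehat\beta^\perp_{-E}$), viewed as a likelihood in $\beta_{E,n}$, is $$p_Z(\beta_{E,n};\widehat\beta_E,\widehat\beta^\perp_{-E},\widehat B)\propto\varphi(\sqrt n\widehat\beta_E;\Pi\sqrt n\beta_{E,n}+\kappa,\Theta)\cdot\varphi(\sqrt n\widehat B;\Psi\sqrt n\widehat\beta_E+\tau,\Gamma),$$ where $\varphi(\cdot;\mu,\Sigma)$ is the Gaussian density with mean $\mu$ and covariance $\Sigma$; in particular it does not depend on $\widehat\beta^\perp_{-E}$.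
   Context: Setting. Observations $(y_i,x_i)\in\mathbb{R}\times\mathbb{R}^p$, $i\in[n]$, are i.i.d. The index set $[n]$ is partitioned into disjoint sets $\mathcal{C}^{(0)},\mathcal{C}^{(1)},\dots,\mathcal{C}^{(K)}$ (machine $0$ is the central machine, machines $1,\dots,K$ are local), with $n_k=|\mathcal{C}^{(k)}|$ and proportions $\rho_k=n_k/n\in(0,1)$ held fixed as $n\to\infty$, $\sum_{k=0}^K\rho_k=1$. $X\in\mathbb{R}^{n\times p}$ has rows $x_i^\top$ and $Y\in\mathbb{R}^n$ has entries $y_i$ for all $i\in[n]$ (all machines, including machine $0$); $X^{(k)},Y^{(k)}$ are the rows/entries with $i\in\mathcal{C}^{(k)}$. For $F\subseteq[p]$, $x_{i,F}$ and $X_F$ denote the subvector/columns indexed by $F$, $-F=[p]\setminus F$, and for a $p\times p$ matrix $M$, $M_{F,G}$ is the submatrix with rows in $F$ and columns in $G$, and $M_{\cdot,F}$ the columns in $F$. $A:\mathbb{R}\to\mathbb{R}$ is the cumulant function of an exponential-family GLM; for $u\in\mathbb{R}^m$, $\nabla A(u)=(A'(u_i))_i$ and $\nabla^2A(u)=(A''(u_i))_i$. $\Lambda=\operatorname{diag}(\lambda_1,\dots,\lambda_p)$ with $\lambda_j>0$. For $k\in[K]$, $\widehat\beta^{\Lambda,(k)}$ minimizes $\ell^{(k)}(\beta)+\|\Lambda\beta\|_1$ over $\beta\in\mathbb{R}^p$, where $\ell^{(k)}(\beta)=\frac{1}{\sqrt n\rho_k}\sum_{i\in\mathcal{C}^{(k)}}\{A(x_i^\top\beta)-y_ix_i^\top\beta\}$;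 $\widehat E^{(k)}=\{j:\widehat\beta^{\Lambda,(k)}_j\neq0\}$ with observed value $E^{(k)}$, and $E=\bigcup_{k=1}^KE^{(k)}$. In all asymptotic statements the sets $E^{(k)}$ and $E$ are treated as fixed (non-random). $\beta_{E,n}\in\mathbb{R}^{|E|}$ is the minimizer of $b\mapsto\mathbb{E}[\sum_{i\in[n]}\{A(x_{i,E}^\top b)-y_ix_{i,E}^\top b\}]$. $W=\operatorname{diag}(\nabla^2A(X_E\beta_{E,n}))$ and $\mathcal{I}=\mathbb{E}[\frac1nX^\top WX]\in\mathbb{R}^{p\times p}$, assumed positive definite and treated as fixed in the limit. Randomization variables: for $k\in[K]$, $\omega^{(k)}=\frac1nX^\top(\nabla A(X\widehat\beta^{\Lambda,(k)})-Y)-\frac1{n_k}X^{(k)\top}(\nabla A(X^{(k)}\widehat\beta^{\Lambda,(k)})-Y^{(k)})\in\mathbb{R}^p$, and $\Omega=(\omega^{(1)\top},\dots,\omega^{(K)\top})^\top\in\mathbb{R}^{pK}$. Aggregated MLE: for $k\in\{0,\dots,K\}$, $\widehat\beta^{(k)}_E$ is the maximum likelihood estimator in the GLM with predictors $E$ computed from $(X^{(k)},Y^{(k)})$; $\widehat{\mathcal{I}}^{(k)}_{E,E}=\frac1{n_k}X_E^{(k)\top}\operatorname{diag}(\nabla^2A(X^{(k)}_E\widehat\beta^{(k)}_E))X^{(k)}_E$; $\widehat{\mathcal{I}}_{E,E}=\sum_{k=0}^K\rho_k\widehat{\mathcal{I}}^{(k)}_{E,E}$; $\widehat\beta_E=\widehat{\mathcal{I}}_{E,E}^{-1}\sum_{k=0}^K\rho_k\widehat{\mathcal{I}}^{(k)}_{E,E}\widehat\beta^{(k)}_E$;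 and $\widehat\beta^\perp_{-E}=\frac1nX_{-E}^\top(\nabla A(X_E\widehat\beta_E)-Y)$. Lasso quantities: $\widehat B^{(k)}\in\mathbb{R}^{|E^{(k)}|}$ collects the nonzero entries of $\widehat\beta^{\Lambda,(k)}$, $\widehat S^{(k)}=\operatorname{sign}(\widehat B^{(k)})$; $\gamma^{(k)}=-\nabla\ell^{(k)}(\widehat\beta^{\Lambda,(k)})\in\mathbb{R}^p$ (so $\gamma^{(k)}_j=\lambda_j\operatorname{sign}(\widehat\beta^{\Lambda,(k)}_j)$ for $j\in E^{(k)}$), and $\widehat Z^{(k)}\in\mathbb{R}^{p-|E^{(k)}|}$ is defined by $\gamma^{(k)}_j=\lambda_j\widehat Z^{(k)}_j$ for $j\notin E^{(k)}$ (so $\|\widehat Z^{(k)}\|_\infty\le1$). $\widehat B,\widehat S,\widehat Z$ stack these over $k\in[K]$, with observed values $B,S,Z$; $\bar d=\sum_k|E^{(k)}|$. Matrices: $\Sigma_\Omega=U\otimes\mathcal{I}$, $U=\operatorname{diag}(\rho_1^{-1},\ldots,\rho_K^{-1})-\mathbf 1_K\mathbf 1_K^\top$. $\mathbb{Q}_1\in\mathbb{R}^{pK\times|E|}$ stacks $K$ copies of $\mathcal{I}_{\cdot,E}$; $\mathbb{Q}_2\in\mathbb{R}^{pK\times\bar d}$ is block diagonal with diagonal blocks $\mathcal{I}_{\cdot,E^{(1)}},\dots,\mathcal{I}_{\cdot,E^{(K)}}$. $\tilde b\in\mathbb{R}^p$ has $\tilde b_E=0$, $\tilde b_{-E}=\sqrt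 n\widehat\beta^\perp_{-E}$, and $\mathbf r\in\mathbb{R}^{pK}$ stacks $r^{(k)}=\gamma^{(k)}+\tilde b$, $k\in[K]$. Then $\Gamma=(\mathbb{Q}_2^\top\Sigma_\Omega^{-1}\mathbb{Q}_2)^{-1}$, $\Psi=\Gamma\mathbb{Q}_2^\top\Sigma_\Omega^{-1}\mathbb{Q}_1$, $\tau=-\Gamma\mathbb{Q}_2^\top\Sigma_\Omega^{-1}\mathbf r$, $\Theta=(\mathcal{I}_{E,E}+\mathbb{Q}_1^\top\Sigma_\Omega^{-1}\mathbb{Q}_1-\Psi^\top\Gamma^{-1}\Psi)^{-1}$, $\Pi=\Theta\mathcal{I}_{E,E}$, $\kappa=\Theta(\Psi^\top\Gamma^{-1}\tau+\mathbb{Q}_1^\top\Sigma_\Omega^{-1}\mathbf r)$. Regularity condition (R): $A$ is three times continuously differentiable; with $e_i=x_i(A'(x_{i,E}^\top\beta_{E,n})-y_i)$ one has $\mathbb{E}[e_i]=0$, $\operatorname{Cov}(e_i)\to\mathcal{I}$, and the $e_i$ satisfy a Lindeberg condition; empirical averages of $x_ix_i^\top A''(\cdot)$ over $[n]$ or over any $\mathcal{C}^{(k)}$, evaluated at parameter values within $O_p(n^{-1/2})$ of $\beta_{E,n}$ (or of the vectors $\mathcal{I}_{E^{(k)},E^{(k)}}^{-1}\mathcal{I}_{E^{(k)},E}\beta_{E,n}$), converge in probability to their expectations. Assumption (A1): for each $k\in[K]$ and each $j\in E\setminus E^{(k)}$, either the $j$-component of $\beta_{E,n}$ is $O(n^{-1/2})$,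 or $X_{E^{(k)}}\mathcal{I}_{E^{(k)},E^{(k)}}^{-1}\mathcal{I}_{E^{(k)},\{j\}}=X_j$. Assumption (A2): $\sqrt n(\widehat\beta_E-\beta_{E,n})=-\mathcal{I}_{E,E}^{-1}\frac1{\sqrt n}\sum_{i\in[n]}x_{i,E}(A'(x_{i,E}^\top\beta_{E,n})-y_i)+o_p(1)$. Assumption (A3): the law of $\sqrt n(\widehat\beta_E-\beta_{E,n},\widehat\beta^\perp_{-E},\Omega)$ is absolutely continuous on $\mathbb{R}^{p(K+1)}$ with densities $p_n$ that are bounded and absolutely equicontinuous. *)

theory Defs
  imports "HOL-Analysis.Analysis"
begin

text \<open>Vectors are functions from an index type to real, matrices are functions of two
indices; all operations only read entries inside the given finite index sets.\<close>

definition mvec :: "'j set \<Rightarrow> ('i \<Rightarrow> 'j \<Rightarrow> real) \<Rightarrow> ('j \<Rightarrow> real) \<Rightarrow> 'i \<Rightarrow> real" where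
  "mvec J M v = (\<lambda>i. \<Sum>j\<in>J. M i j * v j)"

definition mmul :: "'j set \<Rightarrow> ('i \<Rightarrow> 'j \<Rightarrow> real) \<Rightarrow> ('j \<Rightarrow> 'k \<Rightarrow> real) \<Rightarrow> 'i \<Rightarrow> 'k \<Rightarrow> real" where
  "mmul J A B = (\<lambda>i k. \<Sum>j\<in>J. A i j * B j k)"

definition mtr :: "('i \<Rightarrow> 'j \<Rightarrow> real) \<Rightarrow> 'j \<Rightarrow> 'i \<Rightarrow> real" where
  "mtr M = (\<lambda>i j. M j i)"

definition det_on :: "'i set \<Rightarrow> ('i \<Rightarrow> 'i \<Rightarrow> real) \<Rightarrow> real" where
  "det_on I M = (\<Sum>\<pi> \<in> {\<pi>. \<pi> permutes I}. of_int (sign \<pi>) * (\<Prod>i\<in>I. M i (\<pi> i)))"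

definition inv_on :: "'i set \<Rightarrow> ('i \<Rightarrow> 'i \<Rightarrow> real) \<Rightarrow> 'i \<Rightarrow> 'i \<Rightarrow> real" where
  "inv_on I M = (SOME N. (\<forall>i\<in>I. \<forall>j\<in>I. (\<Sum>k\<in>I. M i k * N k j) = (if i = j then 1 else 0))
                     \<and> (\<forall>i j. i \<notin> I \<or> j \<notin> I \<longrightarrow> N i j = 0))"

definition quad_form :: "'i set \<Rightarrow> ('i \<Rightarrow> 'i \<Rightarrow> real) \<Rightarrow> ('i \<Rightarrow> real) \<Rightarrow> real" where
  "quad_form I M v = (\<Sum>i\<in>I. \<Sum>j\<in>I. v i * M i j * v j)"

definition pos_def_on :: "'i set \<Rightarrow> ('i \<Rightarrow> 'i \<Rightarrow> real) \<Rightarrow> bool" where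
  "pos_def_on I M \<longleftrightarrow> (\<forall>i\<in>I. \<forall>j\<in>I. M i j = M j i) \<and>
                       (\<forall>v. (\<exists>i\<in>I. v i \<noteq> 0) \<longrightarrow> quad_form I M v > 0)"

definition gauss_density :: "'i set \<Rightarrow> ('i \<Rightarrow> real) \<Rightarrow> ('i \<Rightarrow> 'i \<Rightarrow> real) \<Rightarrow> ('i \<Rightarrow> real) \<Rightarrow> real" where
  "gauss_density I \<mu> \<Sigma> x =
     exp (- quad_form I (inv_on I \<Sigma>) (\<lambda>i. x i - \<mu> i) / 2) / sqrt ((2 * pi) ^ card I * det_on I \<Sigma>)"

text \<open>Covariates are indexed by \<open>{..<p}\<close>, observations by \<open>{..<n}\<close>; \<open>x i\<close> is the i-th row.\<close>

definition xdot :: "nat \<Rightarrow> (nat \<Rightarrow> real) \<Rightarrow> (nat \<Rightarrow> real) \<Rightarrow> real" where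
  "xdot p xi \<beta> = (\<Sum>j<p. xi j * \<beta> j)"

definition prop_of :: "nat \<Rightarrow> nat set \<Rightarrow> real" where
  "prop_of n C = real (card C) / real n"

definition glm_loss :: "(real \<Rightarrow> real) \<Rightarrow> nat \<Rightarrow> nat \<Rightarrow> nat set \<Rightarrow> (nat \<Rightarrow> nat \<Rightarrow> real) \<Rightarrow> (nat \<Rightarrow> real)
                         \<Rightarrow> (nat \<Rightarrow> real) \<Rightarrow> real" where
  "glm_loss A n p C x y \<beta> =
     (1 / (sqrt (real n) * prop_of n C)) * (\<Sum>i\<in>C. A (xdot p (x i) \<beta>) - y i * xdot p (x i) \<beta>)"

definition lasso_obj :: "(real \<Rightarrow> real) \<Rightarrow> nat \<Rightarrow> nat \<Rightarrow> nat set \<Rightarrow> (nat \<Rightarrow> real) \<Rightarrow> (nat \<Rightarrow> nat \<Rightarrow> real)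
                         \<Rightarrow> (nat \<Rightarrow> real) \<Rightarrow> (nat \<Rightarrow> real) \<Rightarrow> real" where
  "lasso_obj A n p C lam x y \<beta> = glm_loss A n p C x y \<beta> + (\<Sum>j<p. lam j * \<bar>\<beta> j\<bar>)"

definition neg_grad :: "(real \<Rightarrow> real) \<Rightarrow> nat \<Rightarrow> nat \<Rightarrow> nat set \<Rightarrow> (nat \<Rightarrow> nat \<Rightarrow> real) \<Rightarrow> (nat \<Rightarrow> real)
                         \<Rightarrow> (nat \<Rightarrow> real) \<Rightarrow> nat \<Rightarrow> real" where
  "neg_grad A n p C x y \<beta> =
     (\<lambda>j. - (1 / (sqrt (real n) * prop_of n C)) * (\<Sum>i\<in>C. x i j * (deriv A (xdot p (x i) \<beta>) - y i)))"

text \<open>Active set, vector of nonzero entries (a partial map with domain the active set),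
its signs, and the scaled inactive subgradient \<open>Z\<close> (partial map with domain the inactive set).\<close>
definition active :: "nat \<Rightarrow> (nat \<Rightarrow> real) \<Rightarrow> nat set" where
  "active p \<beta> = {j. j < p \<and> \<beta> j \<noteq> 0}"

definition Bmap :: "nat \<Rightarrow> (nat \<Rightarrow> real) \<Rightarrow> nat \<rightharpoonup> real" where
  "Bmap p \<beta> = (\<lambda>j. if j \<in> active p \<beta> then Some (\<beta> j) else None)"

definition Smap :: "nat \<Rightarrow> (nat \<Rightarrow> real) \<Rightarrow> nat \<rightharpoonup> real" where
  "Smap p \<beta> = (\<lambda>j. map_option sgn (Bmap p \<beta> j))"

definition Zmap :: "nat \<Rightarrow> (nat \<Rightarrow> real) \<Rightarrow> (nat \<Rightarrow> real) \<Rightarrow> (nat \<Rightarrow> real) \<Rightarrow> nat \<rightharpoonup> real" where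
  "Zmap p lam \<beta> \<gamma> = (\<lambda>j. if j < p \<and> j \<notin> active p \<beta> then Some (\<gamma> j / lam j) else None)"

definition stack :: "nat \<Rightarrow> (nat \<Rightarrow> nat \<rightharpoonup> real) \<Rightarrow> nat \<times> nat \<rightharpoonup> real" where
  "stack K f = (\<lambda>(k, j). if k \<in> {1..K} then f k j else None)"

definition PKset :: "nat \<Rightarrow> nat \<Rightarrow> (nat \<times> nat) set" where
  "PKset K p = {1..K} \<times> {..<p}"

definition Dset :: "nat \<Rightarrow> (nat \<Rightarrow> nat set) \<Rightarrow> (nat \<times> nat) set" where
  "Dset K Ek = Sigma {1..K} Ek"

text \<open>\<open>\<Sigma>_\<Omega> = U \<otimes> \<I>\<close>, \<open>U = diag(1/\<rho>_k) - 1 1^T\<close>.\<close>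
definition SigmaOmega :: "(nat \<Rightarrow> real) \<Rightarrow> (nat \<Rightarrow> nat \<Rightarrow> real) \<Rightarrow> nat \<times> nat \<Rightarrow> nat \<times> nat \<Rightarrow> real" where
  "SigmaOmega \<rho> Info = (\<lambda>(k, j) (k', j'). ((if k = k' then 1 / \<rho> k else 0) - 1) * Info j j')"

definition Q1 :: "(nat \<Rightarrow> nat \<Rightarrow> real) \<Rightarrow> nat \<times> nat \<Rightarrow> nat \<Rightarrow> real" where
  "Q1 Info = (\<lambda>(k, j) e. Info j e)"

definition Q2 :: "(nat \<Rightarrow> nat \<Rightarrow> real) \<Rightarrow> nat \<times> nat \<Rightarrow> nat \<times> nat \<Rightarrow> real" where
  "Q2 Info = (\<lambda>(k, j) (k', e). if k = k' then Info j e else 0)"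

definition schur :: "nat set \<Rightarrow> (nat \<Rightarrow> nat \<Rightarrow> real) \<Rightarrow> nat \<Rightarrow> nat \<Rightarrow> real" where
  "schur E Info = (\<lambda>i j. Info i j - (\<Sum>a\<in>E. \<Sum>b\<in>E. Info i a * inv_on E Info a b * Info b j))"

text \<open>In the following: K machines, p covariates, \<rho> proportions, Info = \<I>, Ek k = E^{(k)},
E = union of the Ek, r the stacked vector r.\<close>

definition SigInv where
  "SigInv K p \<rho> Info = inv_on (PKset K p) (SigmaOmega \<rho> Info)"

definition GammaM :: "nat \<Rightarrow> nat \<Rightarrow> (nat \<Rightarrow> real) \<Rightarrow> (nat \<Rightarrow> nat \<Rightarrow> real) \<Rightarrow> (nat \<Rightarrow> nat set)
                      \<Rightarrow> nat \<times> nat \<Rightarrow> nat \<times> nat \<Rightarrow> real" where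
  "GammaM K p \<rho> Info Ek = inv_on (Dset K Ek)
      (mmul (PKset K p) (mtr (Q2 Info)) (mmul (PKset K p) (SigInv K p \<rho> Info) (Q2 Info)))"

definition PsiM :: "nat \<Rightarrow> nat \<Rightarrow> (nat \<Rightarrow> real) \<Rightarrow> (nat \<Rightarrow> nat \<Rightarrow> real) \<Rightarrow> (nat \<Rightarrow> nat set)
                      \<Rightarrow> nat \<times> nat \<Rightarrow> nat \<Rightarrow> real" where
  "PsiM K p \<rho> Info Ek = mmul (Dset K Ek) (GammaM K p \<rho> Info Ek)
      (mmul (PKset K p) (mtr (Q2 Info)) (mmul (PKset K p) (SigInv K p \<rho> Info) (Q1 Info)))"

definition tauV :: "nat \<Rightarrow> nat \<Rightarrow> (nat \<Rightarrow> real) \<Rightarrow> (nat \<Rightarrow> nat \<Rightarrow> real) \<Rightarrow> (nat \<Rightarrow> nat set)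
                      \<Rightarrow> (nat \<times> nat \<Rightarrow> real) \<Rightarrow> nat \<times> nat \<Rightarrow> real" where
  "tauV K p \<rho> Info Ek r = (\<lambda>i. - mvec (Dset K Ek) (GammaM K p \<rho> Info Ek)
      (mvec (PKset K p) (mtr (Q2 Info)) (mvec (PKset K p) (SigInv K p \<rho> Info) r)) i)"

definition ThetaM :: "nat \<Rightarrow> nat \<Rightarrow> (nat \<Rightarrow> real) \<Rightarrow> (nat \<Rightarrow> nat \<Rightarrow> real) \<Rightarrow> (nat \<Rightarrow> nat set)
                      \<Rightarrow> nat \<Rightarrow> nat \<Rightarrow> real" where
  "ThetaM K p \<rho> Info Ek = (let E = (\<Union>k\<in>{1..K}. Ek k); D = Dset K Ek; P = PKset K p;
      Psi = PsiM K p \<rho> Info Ek in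
      inv_on E (\<lambda>a b. Info a b
        + mmul P (mtr (Q1 Info)) (mmul P (SigInv K p \<rho> Info) (Q1 Info)) a b
        - mmul D (mtr Psi) (mmul D (inv_on D (GammaM K p \<rho> Info Ek)) Psi) a b))"

definition PiM :: "nat \<Rightarrow> nat \<Rightarrow> (nat \<Rightarrow> real) \<Rightarrow> (nat \<Rightarrow> nat \<Rightarrow> real) \<Rightarrow> (nat \<Rightarrow> nat set)
                      \<Rightarrow> nat \<Rightarrow> nat \<Rightarrow> real" where
  "PiM K p \<rho> Info Ek = mmul (\<Union>k\<in>{1..K}. Ek k) (ThetaM K p \<rho> Info Ek) Info"

definition kappaV :: "nat \<Rightarrow> nat \<Rightarrow> (nat \<Rightarrow> real) \<Rightarrow> (nat \<Rightarrow> nat \<Rightarrow> real) \<Rightarrow> (nat \<Rightarrow> nat set)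
                      \<Rightarrow> (nat \<times> nat \<Rightarrow> real) \<Rightarrow> nat \<Rightarrow> real" where
  "kappaV K p \<rho> Info Ek r = (let E = (\<Union>k\<in>{1..K}. Ek k); D = Dset K Ek; P = PKset K p;
      Psi = PsiM K p \<rho> Info Ek in
      mvec E (ThetaM K p \<rho> Info Ek)
        (\<lambda>a. mvec D (mtr Psi) (mvec D (inv_on D (GammaM K p \<rho> Info Ek)) (tauV K p \<rho> Info Ek r)) a
           + mvec P (mtr (Q1 Info)) (mvec P (SigInv K p \<rho> Info) r) a))"

text \<open>r(k,j) = gamma(k,j) + btilde(j), where gamma(k,j) = lam_j S_j on E(k), lam_j Z_j off E(k);
btilde equals v = sqrt n * betaperp off E and is zero on E.\<close>
definition rV :: "nat \<Rightarrow> (nat \<Rightarrow> nat set) \<Rightarrow> (nat \<Rightarrow> real) \<Rightarrow> (nat \<times> nat \<rightharpoonup> real) \<Rightarrow> (nat \<times> nat \<rightharpoonup> real)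
                   \<Rightarrow> (nat \<Rightarrow> real) \<Rightarrow> nat \<times> nat \<Rightarrow> real" where
  "rV K Ek lam S Z v = (\<lambda>(k, j).
      lam j * (if j \<in> Ek k then the (S (k, j)) else the (Z (k, j)))
      + (if j \<in> (\<Union>k'\<in>{1..K}. Ek k') then 0 else v j))"

end

theory Submission
  imports Defs "Jordan_Normal_Form.Determinant"
begin

definition dot :: "'i set \<Rightarrow> ('i \<Rightarrow> real) \<Rightarrow> ('i \<Rightarrow> real) \<Rightarrow> real" where
  "dot I x y = (\<Sum>i\<in>I. x i * y i)"

definition symm_on :: "'i set \<Rightarrow> ('i \<Rightarrow> 'i \<Rightarrow> real) \<Rightarrow> bool" where
  "symm_on I M \<longleftrightarrow> (\<forall>i\<in>I. \<forall>j\<in>I. M i j = M j i)"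

definition rinv :: "'i set \<Rightarrow> ('i \<Rightarrow> 'i \<Rightarrow> real) \<Rightarrow> ('i \<Rightarrow> 'i \<Rightarrow> real) \<Rightarrow> bool" where
  "rinv I M N \<longleftrightarrow> (\<forall>i\<in>I. \<forall>j\<in>I. (\<Sum>k\<in>I. M i k * N k j) = (if i = j then 1 else 0))"

lemma mvec_cong: "(\<And>j. j \<in> J \<Longrightarrow> x j = y j) \<Longrightarrow> mvec J M x i = mvec J M y i"
  by (simp add: mvec_def)
lemma mvec_cong_mat: "(\<And>j. j \<in> J \<Longrightarrow> M i j = N i j) \<Longrightarrow> mvec J M x i = mvec J N x i"
  by (simp add: mvec_def)
lemma dot_cong: "(\<And>i. i \<in> I \<Longrightarrow> x i = x' i) \<Longrightarrow> (\<And>i. i \<in> I \<Longrightarrow> y i = y' i) \<Longrightarrow> dot I x y = dot I x' y'"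
  by (simp add: dot_def)
lemma quad_dot: "quad_form I M x = dot I x (mvec I M x)"
  unfolding quad_form_def dot_def mvec_def by (simp add: sum_distrib_left mult.assoc)
lemma mvec_add: "mvec J M (\<lambda>j. x j + y j) i = mvec J M x i + mvec J M y i"
  by (simp add: mvec_def distrib_left sum.distrib)
lemma mvec_diff: "mvec J M (\<lambda>j. x j - y j) i = mvec J M x i - mvec J M y i"
  by (simp add: mvec_def right_diff_distrib sum_subtractf)
lemma mvec_neg: "mvec J M (\<lambda>j. - x j) i = - mvec J M x i"
  by (simp add: mvec_def sum_negf)
lemma mvec_scale: "mvec J M (\<lambda>j. c * x j) i = c * mvec J M x i"
  by (simp add: mvec_def sum_distrib_left mult.left_commute)
lemma mvec_zero: "mvec J M (\<lambda>j. 0) i = 0"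
  by (simp add: mvec_def)
lemma mvec_mvec: "finite J \<Longrightarrow> finite K \<Longrightarrow> mvec J A (mvec K B v) i = mvec K (mmul J A B) v i"
  unfolding mvec_def mmul_def
  by (simp add: sum_distrib_left sum_distrib_right mult.assoc sum.swap[of _ J K])
lemma dot_mvec_tr: "finite I \<Longrightarrow> finite J \<Longrightarrow> dot I x (mvec J M y) = dot J (mvec I (mtr M) x) y"
  unfolding dot_def mvec_def mtr_def
  by (simp add: sum_distrib_left sum_distrib_right mult.assoc mult.left_commute sum.swap[of _ I J])
lemma dot_comm: "dot I x y = dot I y x"
  by (simp add: dot_def mult.commute)
lemma dot_add_l: "dot I (\<lambda>i. x i + y i) z = dot I x z + dot I y z"
  by (simp add: dot_def distrib_right sum.distrib)
lemma dot_add_r: "dot I z (\<lambda>i. x i + y i) = dot I z x + dot I z y"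
  by (simp add: dot_def distrib_left sum.distrib)
lemma dot_diff_l: "dot I (\<lambda>i. x i - y i) z = dot I x z - dot I y z"
  by (simp add: dot_def left_diff_distrib sum_subtractf)
lemma dot_diff_r: "dot I z (\<lambda>i. x i - y i) = dot I z x - dot I z y"
  by (simp add: dot_def right_diff_distrib sum_subtractf)
lemma dot_neg_l: "dot I (\<lambda>i. - x i) z = - dot I x z"
  by (simp add: dot_def sum_negf)
lemma dot_neg_r: "dot I z (\<lambda>i. - x i) = - dot I z x"
  by (simp add: dot_def sum_negf)
lemma dot_scale_l: "dot I (\<lambda>i. c * x i) z = c * dot I x z"
  by (simp add: dot_def sum_distrib_left mult.assoc)
lemma dot_scale_r: "dot I z (\<lambda>i. c * x i) = c * dot I z x"
  by (simp add: dot_def sum_distrib_left mult.left_commute)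

lemma mvec_sym: "symm_on I M \<Longrightarrow> i \<in> I \<Longrightarrow> mvec I (mtr M) x i = mvec I M x i"
  unfolding symm_on_def mvec_def mtr_def by (intro sum.cong) auto

lemma rinv_mvec: "finite I \<Longrightarrow> rinv I M N \<Longrightarrow> i \<in> I \<Longrightarrow> mvec I M (mvec I N x) i = x i"
proof -
  assume f: "finite I" and r: "rinv I M N" and i: "i \<in> I"
  have "mvec I M (mvec I N x) i = mvec I (mmul I M N) x i" by (rule mvec_mvec[OF f f])
  also have "\<dots> = (\<Sum>j\<in>I. (if i = j then 1 else 0) * x j)"
    unfolding mvec_def mmul_def using r i by (intro sum.cong) (auto simp: rinv_def)
  also have "\<dots> = (\<Sum>j\<in>I. if i = j then x j else 0)" by (intro sum.cong) auto
  also have "\<dots> = x i" using f i by simp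
  finally show ?thesis .
qed

definition enum_of :: "'i set \<Rightarrow> nat \<Rightarrow> 'i" where
  "enum_of I = (SOME h. bij_betw h {0..<card I} I)"

lemma enum_bij: "finite I \<Longrightarrow> bij_betw (enum_of I) {0..<card I} I"
  unfolding enum_of_def by (metis someI_ex ex_bij_betw_nat_finite)

definition toJ :: "'i set \<Rightarrow> ('i \<Rightarrow> 'i \<Rightarrow> real) \<Rightarrow> real mat" where
  "toJ I M = Matrix.mat (card I) (card I) (\<lambda>(a,b). M (enum_of I a) (enum_of I b))"

lemma toJ_carrier: "toJ I M \<in> carrier_mat (card I) (card I)"
  by (simp add: toJ_def)

lemma enum_facts:
  assumes fin: "finite I"
  defines "g \<equiv> enum_of I" and "h \<equiv> inv_into {0..<card I} (enum_of I)"
  shows "bij_betw g {0..<card I} I" "bij_betw h I {0..<card I}"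
    "\<And>x. x \<in> I \<Longrightarrow> g (h x) = x" "\<And>a. a < card I \<Longrightarrow> h (g a) = a"
    "\<And>x. x \<in> I \<Longrightarrow> h x < card I" "\<And>a. a < card I \<Longrightarrow> g a \<in> I"
    "inj_on g {0..<card I}" "inj_on h I"
proof -
  have bg0: "bij_betw (enum_of I) {0..<card I} I" by (rule enum_bij[OF fin])
  show bg: "bij_betw g {0..<card I} I" using bg0 by (simp add: g_def)
  show bh: "bij_betw h I {0..<card I}" unfolding h_def by (rule bij_betw_inv_into[OF bg0])
  show "\<And>x. x \<in> I \<Longrightarrow> g (h x) = x" unfolding h_def g_def by (rule bij_betw_inv_into_right[OF bg0])
  show "\<And>a. a < card I \<Longrightarrow> h (g a) = a" unfolding h_def g_def by (rule bij_betw_inv_into_left[OF bg0]) simp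
  show "\<And>x. x \<in> I \<Longrightarrow> h x < card I" using bij_betwE[OF bh] by simp
  show "\<And>a. a < card I \<Longrightarrow> g a \<in> I" using bij_betwE[OF bg] by simp
  show "inj_on g {0..<card I}" using bg by (rule bij_betw_imp_inj_on)
  show "inj_on h I" using bh by (rule bij_betw_imp_inj_on)
qed

lemma det_on_toJ:
  assumes fin: "finite I"
  shows "det_on I M = Determinant.det (toJ I M)"
proof -
  define m where "m = card I"
  define g where "g = enum_of I"
  define h where "h = inv_into {0..<m} g"
  note ef = enum_facts[OF fin, folded g_def m_def, folded h_def]
  have "Determinant.det (toJ I M) = (\<Sum>q\<in>{q. q permutes {0..<m}}. signof q * (\<Prod>a=0..<m. M (g a) (g (q a))))"
    unfolding det_def'[OF toJ_carrier] m_def[symmetric]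
    by (intro sum.cong refl prod.cong) (auto simp: toJ_def m_def g_def permutes_in_image)
  also have "\<dots> = (\<Sum>\<pi>\<in>{\<pi>. \<pi> permutes I}. of_int (sign \<pi>) * (\<Prod>x\<in>I. M x (\<pi> x)))"
  proof (rule sum.reindex_bij_witness[where i = "map_permutation I h" and j = "map_permutation {0..<m} g"])
    fix q assume "q \<in> {q. q permutes {0..<m}}"
    then have q: "q permutes {0..<m}" by simp
    show "map_permutation I h (map_permutation {0..<m} g q) = q"
      by (rule map_permutation_compose_inv[OF ef(1) q]) (use ef(4) in auto)
    show "map_permutation {0..<m} g q \<in> {\<pi>. \<pi> permutes I}"
      using map_permutation_permutes[OF ef(1) q] by simp
    have s: "sign (map_permutation {0..<m} g q) = sign q"
      by (rule sign_map_permutation[OF ef(7) q]) simp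
    have "(\<Prod>x\<in>I. M x (map_permutation {0..<m} g q x)) = (\<Prod>a\<in>{0..<m}. M (g a) (map_permutation {0..<m} g q (g a)))"
      by (rule prod.reindex_bij_betw[OF ef(1), symmetric])
    also have "\<dots> = (\<Prod>a=0..<m. M (g a) (g (q a)))"
      by (intro prod.cong refl) (simp add: map_permutation_apply[OF ef(7)])
    finally show "of_int (sign (map_permutation {0..<m} g q)) * (\<Prod>x\<in>I. M x (map_permutation {0..<m} g q x))
        = signof q * (\<Prod>a=0..<m. M (g a) (g (q a)))" using s by simp
  next
    fix \<pi> assume "\<pi> \<in> {\<pi>. \<pi> permutes I}"
    then have p: "\<pi> permutes I" by simp
    show "map_permutation {0..<m} g (map_permutation I h \<pi>) = \<pi>"
      by (rule map_permutation_compose_inv[OF ef(2) p]) (use ef(3) in auto)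
    show "map_permutation I h \<pi> \<in> {q. q permutes {0..<m}}"
      using map_permutation_permutes[OF ef(2) p] by simp
  qed
  finally show ?thesis unfolding det_on_def by simp
qed

lemma mvec_toJ:
  assumes fin: "finite I" and v: "v \<in> carrier_vec (card I)" and x: "x \<in> I"
  shows "mvec I M (\<lambda>y. Matrix.vec_index v (inv_into {0..<card I} (enum_of I) y)) x
     = Matrix.vec_index (toJ I M *\<^sub>v v) (inv_into {0..<card I} (enum_of I) x)"
proof -
  define m where "m = card I"
  define g where "g = enum_of I"
  define h where "h = inv_into {0..<m} g"
  note ef = enum_facts[OF fin, folded g_def m_def, folded h_def]
  have "mvec I M (\<lambda>y. Matrix.vec_index v (h y)) x = (\<Sum>b\<in>{0..<m}. M x (g b) * Matrix.vec_index v (h (g b)))"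
    unfolding mvec_def by (rule sum.reindex_bij_betw[OF ef(1), symmetric])
  also have "\<dots> = (\<Sum>b\<in>{0..<m}. M (g (h x)) (g b) * Matrix.vec_index v b)" by (intro sum.cong refl) (simp add: ef x)
  also have "\<dots> = Matrix.vec_index (toJ I M *\<^sub>v v) (h x)"
    using v ef(5)[OF x] by (simp add: toJ_def m_def g_def scalar_prod_def)
  finally show ?thesis by (simp add: h_def g_def m_def)
qed

lemma pd_det_nz:
  assumes fin: "finite I" and pd: "pos_def_on I M"
  shows "det_on I M \<noteq> 0"
proof
  assume d0: "det_on I M = 0"
  define m where "m = card I"
  define g where "g = enum_of I"
  define h where "h = inv_into {0..<m} g"
  note ef = enum_facts[OF fin, folded g_def m_def, folded h_def]
  have "Determinant.det (toJ I M) = 0" using d0 det_on_toJ[OF fin] by simp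
  then obtain v where v: "v \<in> carrier_vec m" "v \<noteq> 0\<^sub>v m" "toJ I M *\<^sub>v v = 0\<^sub>v m"
    using det_0_iff_vec_prod_zero[OF toJ_carrier[of I M]] m_def by auto
  obtain a where a: "a < m" "Matrix.vec_index v a \<noteq> 0"
    using v(1,2) by (metis carrier_vecD eq_vecI index_zero_vec(1) index_zero_vec(2))
  define w where "w = (\<lambda>x. Matrix.vec_index v (h x))"
  have Mw: "mvec I M w x = 0" if x: "x \<in> I" for x
  proof -
    have "mvec I M w x = Matrix.vec_index (toJ I M *\<^sub>v v) (h x)"
      unfolding w_def h_def g_def m_def by (rule mvec_toJ[OF fin v(1)[unfolded m_def] x])
    also have "\<dots> = 0" using v(3) ef(5)[OF x] by (simp add: m_def)
    finally show ?thesis .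
  qed
  have "quad_form I M w = 0" by (simp add: quad_dot dot_def Mw)
  moreover have "quad_form I M w > 0"
    using pd unfolding pos_def_on_def
    by (metis a ef(4) ef(6) w_def m_def)
  ultimately show False by simp
qed

lemma pd_rinv_ex:
  assumes fin: "finite I" and pd: "pos_def_on I M"
  shows "\<exists>N. rinv I M N \<and> (\<forall>i j. i \<notin> I \<or> j \<notin> I \<longrightarrow> N i j = 0)"
proof -
  define m where "m = card I"
  define g where "g = enum_of I"
  define h where "h = inv_into {0..<m} g"
  note ef = enum_facts[OF fin, folded g_def m_def, folded h_def]
  have "Determinant.det (toJ I M) \<noteq> 0" using pd_det_nz[OF fin pd] det_on_toJ[OF fin] by simp
  from det_non_zero_imp_unit[OF toJ_carrier this, of "()"]
  obtain B where B: "B \<in> carrier_mat m m" "toJ I M * B = 1\<^sub>m m"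
    unfolding Units_def ring_mat_def by (auto simp: m_def)
  define N where "N x y = (if x \<in> I \<and> y \<in> I then B $$ (h x, h y) else 0)" for x y
  show ?thesis
  proof (intro exI conjI)
    show "rinv I M N" unfolding rinv_def
    proof (intro ballI)
      fix i j assume i: "i \<in> I" and j: "j \<in> I"
      have "(\<Sum>k\<in>I. M i k * N k j) = (\<Sum>c\<in>{0..<m}. M i (g c) * N (g c) j)"
        by (rule sum.reindex_bij_betw[OF ef(1), symmetric])
      also have "\<dots> = (\<Sum>c\<in>{0..<m}. toJ I M $$ (h i, c) * B $$ (c, h j))"
        using i j ef by (intro sum.cong refl) (auto simp: N_def toJ_def m_def g_def)
      also have "\<dots> = (toJ I M * B) $$ (h i, h j)"
        using B(1) ef(5)[OF i] ef(5)[OF j] by (simp add: scalar_prod_def toJ_def m_def)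
      also have "\<dots> = (1\<^sub>m m :: real mat) $$ (h i, h j)" using B(2) by simp
      also have "\<dots> = (if h i = h j then 1 else 0)" using ef(5)[OF i] ef(5)[OF j] by (simp add: m_def)
      also have "\<dots> = (if i = j then 1 else 0)" using inj_on_eq_iff[OF ef(8) i j] by simp
      finally show "(\<Sum>k\<in>I. M i k * N k j) = (if i = j then 1 else 0)" .
    qed
    show "\<forall>i j. i \<notin> I \<or> j \<notin> I \<longrightarrow> N i j = 0" by (auto simp: N_def)
  qed
qed

lemma inv_on_props:
  assumes fin: "finite I" and pd: "pos_def_on I M"
  shows "rinv I M (inv_on I M)" "\<forall>i j. i \<notin> I \<or> j \<notin> I \<longrightarrow> inv_on I M i j = 0"
proof -
  have ex: "\<exists>N. (\<forall>i\<in>I. \<forall>j\<in>I. (\<Sum>k\<in>I. M i k * N k j) = (if i = j then 1 else 0))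
       \<and> (\<forall>i j. i \<notin> I \<or> j \<notin> I \<longrightarrow> N i j = 0)"
    using pd_rinv_ex[OF fin pd] unfolding rinv_def .
  have "rinv I M (inv_on I M) \<and> (\<forall>i j. i \<notin> I \<or> j \<notin> I \<longrightarrow> inv_on I M i j = 0)"
    unfolding inv_on_def rinv_def by (rule someI_ex[OF ex])
  then show "rinv I M (inv_on I M)" "\<forall>i j. i \<notin> I \<or> j \<notin> I \<longrightarrow> inv_on I M i j = 0" by auto
qed

lemma sum_delta_r: "finite I \<Longrightarrow> j \<in> I \<Longrightarrow> (\<Sum>a\<in>I. f a * (if a = j then 1 else 0)) = (f j :: real)"
proof -
  assume "finite I" "j \<in> I"
  have "(\<Sum>a\<in>I. f a * (if a = j then 1 else 0)) = (\<Sum>a\<in>I. if a = j then f a else 0)"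
    by (intro sum.cong) auto
  then show ?thesis using \<open>finite I\<close> \<open>j \<in> I\<close> by simp
qed

lemma sum_delta_l: "finite I \<Longrightarrow> i \<in> I \<Longrightarrow> (\<Sum>a\<in>I. (if i = a then 1 else 0) * f a) = (f i :: real)"
proof -
  assume "finite I" "i \<in> I"
  have "(\<Sum>a\<in>I. (if i = a then 1 else 0) * f a) = (\<Sum>a\<in>I. if i = a then f a else 0)"
    by (intro sum.cong) auto
  then show ?thesis using \<open>finite I\<close> \<open>i \<in> I\<close> by simp
qed

lemma sum_swap_mult: "(\<Sum>k\<in>I. a k * (\<Sum>l\<in>J. b k l * c l)) = (\<Sum>l\<in>J. (\<Sum>k\<in>I. a k * b k l) * (c l :: real))"
  unfolding sum_distrib_left sum_distrib_right mult.assoc by (rule sum.swap)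

lemma rinv_assoc_eq:
  assumes fin: "finite I" and r1: "rinv I A B" and r2: "rinv I B C" and i: "i \<in> I" and j: "j \<in> I"
  shows "A i j = C i j"
proof -
  have "A i j = (\<Sum>k\<in>I. A i k * (\<Sum>l\<in>I. B k l * C l j))"
    using r2 j fin i unfolding rinv_def by (simp add: sum_delta_r)
  also have "\<dots> = (\<Sum>l\<in>I. (\<Sum>k\<in>I. A i k * B k l) * C l j)"
    by (rule sum_swap_mult)
  also have "\<dots> = C i j"
    using r1 i fin unfolding rinv_def by (simp add: sum_delta_l)
  finally show ?thesis .
qed

lemma rinv_sym_linv:
  assumes fin: "finite I" and sym: "symm_on I M" and r: "rinv I M N"
  shows "symm_on I N" "rinv I N M"
proof -
  have L: "(\<Sum>k\<in>I. N k i * M k j) = (if i = j then 1 else 0)" if i: "i \<in> I" and j: "j \<in> I" for i j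
  proof -
    have "(\<Sum>k\<in>I. N k i * M k j) = (\<Sum>k\<in>I. M j k * N k i)"
      using sym j by (intro sum.cong) (auto simp: symm_on_def mult.commute)
    also have "\<dots> = (if j = i then 1 else 0)" using r i j unfolding rinv_def by blast
    finally show ?thesis by auto
  qed
  have S: "N i j = N j i" if i: "i \<in> I" and j: "j \<in> I" for i j
  proof -
    have "N j i = (\<Sum>a\<in>I. N a i * (\<Sum>b\<in>I. M a b * N b j))"
      using r j fin i unfolding rinv_def by (simp add: sum_delta_r)
    also have "\<dots> = (\<Sum>b\<in>I. (\<Sum>a\<in>I. N a i * M a b) * N b j)"
      by (rule sum_swap_mult)
    also have "\<dots> = N i j"
      using L i fin by (simp add: sum_delta_l)
    finally show ?thesis by simp
  qed
  show "symm_on I N" unfolding symm_on_def using S by blast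
  show "rinv I N M" unfolding rinv_def
  proof (intro ballI)
    fix i j assume i: "i \<in> I" and j: "j \<in> I"
    have "(\<Sum>k\<in>I. N i k * M k j) = (\<Sum>k\<in>I. N k i * M k j)"
      using S i by (intro sum.cong) auto
    then show "(\<Sum>k\<in>I. N i k * M k j) = (if i = j then 1 else 0)" using L i j by simp
  qed
qed

lemma pd_symm: "pos_def_on I M \<Longrightarrow> symm_on I M"
  by (simp add: pos_def_on_def symm_on_def)

lemma quad_pos: "pos_def_on I M \<Longrightarrow> i \<in> I \<Longrightarrow> v i \<noteq> 0 \<Longrightarrow> quad_form I M v > 0"
  unfolding pos_def_on_def by blast

lemma quad_cong: "(\<And>i. i \<in> I \<Longrightarrow> v i = w i) \<Longrightarrow> quad_form I M v = quad_form I M w"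
  by (simp add: quad_form_def)

lemma quad_cong_mat: "(\<And>i j. i \<in> I \<Longrightarrow> j \<in> I \<Longrightarrow> M i j = N i j) \<Longrightarrow> quad_form I M v = quad_form I N v"
  by (simp add: quad_form_def)

lemma pd_nonneg: "pos_def_on I M \<Longrightarrow> quad_form I M v \<ge> 0"
proof (cases "\<exists>i\<in>I. v i \<noteq> 0")
  case True
  then show "pos_def_on I M \<Longrightarrow> quad_form I M v \<ge> 0" unfolding pos_def_on_def by (meson less_le)
next
  case False
  then have "quad_form I M v = 0" unfolding quad_form_def by (intro sum.neutral) auto
  then show ?thesis by simp
qed

lemma inv_pd:
  assumes fin: "finite I" and pd: "pos_def_on I M"
  shows "pos_def_on I (inv_on I M)" "rinv I M (inv_on I M)" "rinv I (inv_on I M) M" "symm_on I (inv_on I M)"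
proof -
  define N where "N = inv_on I M"
  have r: "rinv I M N" using inv_on_props[OF fin pd] by (simp add: N_def)
  have sN: "symm_on I N" and l: "rinv I N M" using rinv_sym_linv[OF fin pd_symm[OF pd] r] by auto
  have "quad_form I N v > 0" if v: "i \<in> I" "v i \<noteq> 0" for v i
  proof -
    define y where "y = mvec I N v"
    have My: "mvec I M y k = v k" if "k \<in> I" for k unfolding y_def by (rule rinv_mvec[OF fin r that])
    have "\<exists>k\<in>I. y k \<noteq> 0"
    proof (rule ccontr)
      assume "\<not> (\<exists>k\<in>I. y k \<noteq> 0)"
      then have "mvec I M y i = 0" unfolding mvec_def by (intro sum.neutral) auto
      then show False using My[OF v(1)] v(2) by simp
    qed
    then obtain k where k: "k \<in> I" "y k \<noteq> 0" by blast
    have "quad_form I N v = dot I v y" by (simp add: quad_dot y_def)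
    also have "\<dots> = dot I (mvec I M y) y" by (rule dot_cong) (use My in auto)
    also have "\<dots> = quad_form I M y" by (simp add: quad_dot dot_comm)
    also have "\<dots> > 0" by (rule quad_pos[where v=y, OF pd k(1) k(2)])
    finally show ?thesis .
  qed
  then show "pos_def_on I (inv_on I M)" using sN unfolding pos_def_on_def symm_on_def N_def by blast
  show "rinv I M (inv_on I M)" "rinv I (inv_on I M) M" "symm_on I (inv_on I M)" using r l sN by (auto simp: N_def)
qed

lemma inv_inv:
  assumes fin: "finite I" and pd: "pos_def_on I M" and i: "i \<in> I" and j: "j \<in> I"
  shows "inv_on I (inv_on I M) i j = M i j"
proof -
  have p2: "pos_def_on I (inv_on I M)" using inv_pd[OF fin pd] by auto
  have "M i j = inv_on I (inv_on I M) i j"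
    by (rule rinv_assoc_eq[OF fin inv_pd(2)[OF fin pd] inv_pd(2)[OF fin p2] i j])
  then show ?thesis by simp
qed

lemma toJ_id: "finite I \<Longrightarrow> toJ I (\<lambda>i j. if i = j then 1 else 0) = 1\<^sub>m (card I)"
proof -
  assume fin: "finite I"
  note ef = enum_facts[OF fin]
  show ?thesis
  proof (rule eq_matI)
    fix a b assume a: "a < dim_row (1\<^sub>m (card I) :: real mat)" and b: "b < dim_col (1\<^sub>m (card I) :: real mat)"
    have "(enum_of I a = enum_of I b) = (a = b)"
      using inj_on_eq_iff[OF ef(7)] a b by simp
    then show "toJ I (\<lambda>i j. if i = j then 1 else 0) $$ (a, b) = 1\<^sub>m (card I) $$ (a, b)"
      using a b by (simp add: toJ_def)
  qed (auto simp: toJ_def)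
qed

lemma quad_homotopy:
  assumes fin: "finite I"
  shows "quad_form I (\<lambda>i j. (1 - t) * (if i = j then 1 else 0) + t * M i j) v
     = (1 - t) * (\<Sum>i\<in>I. v i * v i) + t * quad_form I M v"
proof -
  have "quad_form I (\<lambda>i j. (1 - t) * (if i = j then 1 else 0) + t * M i j) v
      = (\<Sum>i\<in>I. (1 - t) * (\<Sum>j\<in>I. v i * (if i = j then 1 else 0) * v j) + t * (\<Sum>j\<in>I. v i * M i j * v j))"
    unfolding quad_form_def
  proof (intro sum.cong refl)
    fix i
    have "(\<Sum>j\<in>I. v i * ((1 - t) * (if i = j then 1 else 0) + t * M i j) * v j)
        = (\<Sum>j\<in>I. (1 - t) * (v i * (if i = j then 1 else 0) * v j) + t * (v i * M i j * v j))"
      by (intro sum.cong refl) (simp add: algebra_simps)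
    also have "\<dots> = (1 - t) * (\<Sum>j\<in>I. v i * (if i = j then 1 else 0) * v j) + t * (\<Sum>j\<in>I. v i * M i j * v j)"
      by (simp add: sum.distrib sum_distrib_left)
    finally show "(\<Sum>j\<in>I. v i * ((1 - t) * (if i = j then 1 else 0) + t * M i j) * v j)
        = (1 - t) * (\<Sum>j\<in>I. v i * (if i = j then 1 else 0) * v j) + t * (\<Sum>j\<in>I. v i * M i j * v j)" .
  qed
  also have "\<dots> = (\<Sum>i\<in>I. (1 - t) * (v i * v i) + t * (\<Sum>j\<in>I. v i * M i j * v j))"
  proof (intro sum.cong refl)
    fix i assume "i \<in> I"
    have "(\<Sum>j\<in>I. v i * (if i = j then 1 else 0) * v j) = (\<Sum>j\<in>I. if j = i then v i * v j else 0)"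
      by (intro sum.cong) auto
    also have "\<dots> = v i * v i" using \<open>i \<in> I\<close> fin by (simp add: sum.delta)
    finally show "(1 - t) * (\<Sum>j\<in>I. v i * (if i = j then 1 else 0) * v j) + t * (\<Sum>j\<in>I. v i * M i j * v j)
        = (1 - t) * (v i * v i) + t * (\<Sum>j\<in>I. v i * M i j * v j)" by simp
  qed
  also have "\<dots> = (1 - t) * (\<Sum>i\<in>I. v i * v i) + t * quad_form I M v"
    unfolding quad_form_def by (simp add: sum.distrib sum_distrib_left)
  finally show ?thesis .
qed

lemma pd_det_pos:
  assumes fin: "finite I" and pd: "pos_def_on I M"
  shows "det_on I M > 0"
proof -
  define Mt where "Mt t = (\<lambda>i j. (1 - t) * (if i = j then 1 else 0) + t * M i j)" for t :: real
  have pdt: "pos_def_on I (Mt t)" if t: "0 \<le> t" "t \<le> 1" for t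
    unfolding pos_def_on_def
  proof (intro conjI allI impI ballI)
    fix i j assume "i \<in> I" "j \<in> I"
    then show "Mt t i j = Mt t j i" using pd_symm[OF pd] by (auto simp: Mt_def symm_on_def)
  next
    fix v :: "_ \<Rightarrow> real" assume "\<exists>i\<in>I. v i \<noteq> 0"
    then obtain i where i: "i \<in> I" "v i \<noteq> 0" by blast
    have q: "quad_form I M v > 0" by (rule quad_pos[where v=v, OF pd i(1) i(2)])
    have s: "(\<Sum>i\<in>I. v i * v i) > 0"
    proof -
      have "(\<Sum>i\<in>I. v i * v i) \<ge> v i * v i"
        by (rule member_le_sum[OF i(1)]) (auto simp: fin)
      moreover have "v i * v i > 0" using i(2) not_real_square_gt_zero by blast
      ultimately show ?thesis by linarith
    qed
    show "quad_form I (Mt t) v > 0"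
    proof (cases "t = 0")
      case True
      then show ?thesis using s unfolding Mt_def quad_homotopy[OF fin] by simp
    next
      case False
      then have "t > 0" using t by simp
      then have "t * quad_form I M v > 0" using q by simp
      moreover have "(1 - t) * (\<Sum>i\<in>I. v i * v i) \<ge> 0" using t s by simp
      ultimately show ?thesis unfolding Mt_def quad_homotopy[OF fin] by linarith
    qed
  qed
  have cont: "continuous_on {0..1} (\<lambda>t. det_on I (Mt t))"
    unfolding det_on_def Mt_def by (intro continuous_intros)
  have F0: "det_on I (Mt 0) = 1"
    using det_on_toJ[OF fin, of "Mt 0"] toJ_id[OF fin] by (simp add: Mt_def)
  have F1: "Mt 1 = M" by (simp add: Mt_def)
  show ?thesis
  proof (rule ccontr)
    assume "\<not> det_on I M > 0"
    then have "det_on I (Mt 1) \<le> 0" using F1 by simp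
    then obtain x where x: "0 \<le> x" "x \<le> 1" "det_on I (Mt x) = 0"
      using IVT2'[of "\<lambda>t. det_on I (Mt t)" 1 0 0] cont F0 by auto
    then show False using pd_det_nz[OF fin pdt[OF x(1,2)]] by simp
  qed
qed


lemma mvec_mmul: "finite J \<Longrightarrow> finite K \<Longrightarrow> mvec K (mmul J A B) v = mvec J A (mvec K B v)"
  by (rule ext) (simp add: mvec_mvec)
lemma mtr_mmul: "mtr (mmul J A B) = mmul J (mtr B) (mtr A)"
  unfolding mtr_def mmul_def by (simp add: mult.commute)
lemma mtr_mtr: "mtr (mtr A) = A"
  by (simp add: mtr_def)
lemma mmul_assoc: "finite J \<Longrightarrow> finite K \<Longrightarrow> mmul J (mmul K A B) C = mmul K A (mmul J B C)"
  unfolding mmul_def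
  by (intro ext) (simp add: sum_distrib_left sum_distrib_right mult.assoc sum.swap[of _ J K])
lemma mvec_add_fun: "mvec J M (\<lambda>j. x j + y j) = (\<lambda>i. mvec J M x i + mvec J M y i)"
  by (rule ext) (rule mvec_add)
lemma mvec_diff_fun: "mvec J M (\<lambda>j. x j - y j) = (\<lambda>i. mvec J M x i - mvec J M y i)"
  by (rule ext) (rule mvec_diff)
lemma mvec_neg_fun: "mvec J M (\<lambda>j. - x j) = (\<lambda>i. - mvec J M x i)"
  by (rule ext) (rule mvec_neg)
lemma mvec_mat_add_diff:
  "mvec J (\<lambda>a b. A a b + B a b - C a b) z = (\<lambda>i. mvec J A z i + mvec J B z i - mvec J C z i)"
  unfolding mvec_def by (rule ext) (simp add: distrib_right left_diff_distrib sum.distrib sum_subtractf)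

lemma dot_tr2: "finite I \<Longrightarrow> finite J \<Longrightarrow> dot I (mvec J M y) w = dot J y (mvec I (mtr M) w)"
  using dot_mvec_tr[of I J w M y] by (simp add: dot_comm)

lemma dot_sym_on: assumes "finite I" "symm_on I M" shows "dot I a (mvec I M b) = dot I b (mvec I M a)"
proof -
  have "dot I a (mvec I M b) = dot I (mvec I (mtr M) a) b" by (rule dot_mvec_tr[OF assms(1) assms(1)])
  also have "\<dots> = dot I (mvec I M a) b" by (rule dot_cong) (auto simp: mvec_sym[OF assms(2)])
  finally show ?thesis by (simp add: dot_comm)
qed

lemma symm_on_mtr: "mtr M = M \<Longrightarrow> symm_on I M"
  unfolding symm_on_def mtr_def by metis

lemma mtr_inv_on: assumes "finite I" "pos_def_on I M" shows "mtr (inv_on I M) = inv_on I M"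
proof (intro ext)
  fix i j
  show "mtr (inv_on I M) i j = inv_on I M i j"
  proof (cases "i \<in> I \<and> j \<in> I")
    case True
    then show ?thesis using inv_pd(4)[OF assms] by (auto simp: mtr_def symm_on_def)
  next
    case False
    then show ?thesis using inv_on_props(2)[OF assms] by (auto simp: mtr_def)
  qed
qed

lemma quad_diff_sym: assumes "finite I" "symm_on I M"
  shows "quad_form I M (\<lambda>i. x i - y i) = quad_form I M x - 2 * dot I x (mvec I M y) + quad_form I M y"
proof -
  have "quad_form I M (\<lambda>i. x i - y i) = dot I x (mvec I M x) - dot I x (mvec I M y) - dot I y (mvec I M x) + dot I y (mvec I M y)"
    unfolding quad_dot mvec_diff_fun dot_diff_l dot_diff_r by simp
  also have "dot I y (mvec I M x) = dot I x (mvec I M y)" by (rule dot_sym_on[OF assms])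
  finally show ?thesis by (simp add: quad_dot)
qed

lemma dot_delta: assumes "finite I" "a \<in> I" "b \<in> I"
  shows "dot I (\<lambda>i. if i = a then 1 else 0) (mvec I M (\<lambda>i. if i = b then 1 else 0)) = M a b"
proof -
  have mv: "mvec I M (\<lambda>i. if i = b then 1 else 0) i = M i b" for i
    unfolding mvec_def using sum_delta_r[OF assms(1) assms(3), of "M i"] by simp
  have "dot I (\<lambda>i. if i = a then 1 else 0) (mvec I M (\<lambda>i. if i = b then 1 else 0)) = (\<Sum>i\<in>I. (if a = i then 1 else 0) * M i b)"
    unfolding dot_def mv by (intro sum.cong) auto
  also have "\<dots> = M a b" by (rule sum_delta_l[OF assms(1) assms(2)])
  finally show ?thesis .
qed

context
  fixes E :: "'e set" and D :: "'d set" and P :: "'p set"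
    and Q1 :: "'p \<Rightarrow> 'e \<Rightarrow> real" and Q2 :: "'p \<Rightarrow> 'd \<Rightarrow> real"
    and S :: "'p \<Rightarrow> 'p \<Rightarrow> real" and Info :: "'e \<Rightarrow> 'e \<Rightarrow> real"
    and G Gam :: "'d \<Rightarrow> 'd \<Rightarrow> real" and Psi :: "'d \<Rightarrow> 'e \<Rightarrow> real" and H Th :: "'e \<Rightarrow> 'e \<Rightarrow> real"
  assumes finE: "finite E" and finD: "finite D" and finP: "finite P"
    and S_pd: "pos_def_on P S" and S_sym: "mtr S = S"
    and I_pd: "pos_def_on E Info"
    and Q2_inj: "\<And>x. (\<forall>i\<in>P. mvec D Q2 x i = 0) \<Longrightarrow> \<forall>d\<in>D. x d = 0"
    and G_def: "G = mmul P (mtr Q2) (mmul P S Q2)"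
    and Gam_def: "Gam = inv_on D G"
    and Psi_def: "Psi = mmul D Gam (mmul P (mtr Q2) (mmul P S Q1))"
    and H_def: "H = (\<lambda>a b. Info a b + mmul P (mtr Q1) (mmul P S Q1) a b
                          - mmul D (mtr Psi) (mmul D (inv_on D Gam) Psi) a b)"
    and Th_def: "Th = inv_on E H"
begin

lemma Ssym_dot: "dot P a (mvec P S b) = dot P b (mvec P S a)"
  by (rule dot_sym_on[OF finP symm_on_mtr[OF S_sym]])

lemma G_sym: "mtr G = G"
  unfolding G_def mtr_mmul mtr_mtr S_sym using mmul_assoc[OF finP finP] by metis

lemma Gv: "mvec D G x = mvec P (mtr Q2) (mvec P S (mvec D Q2 x))"
  unfolding G_def by (simp add: mvec_mmul finP finD)

lemma dotQ2: "dot P (mvec D Q2 z) w = dot D z (mvec P (mtr Q2) w)"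
  by (rule dot_tr2[OF finP finD])

lemma dotQ1: "dot E x (mvec P (mtr Q1) w) = dot P (mvec E Q1 x) w"
  using dot_mvec_tr[OF finE finP, of x "mtr Q1" w] by (simp add: mtr_mtr)

lemma G_pd: "pos_def_on D G"
  unfolding pos_def_on_def
proof (intro conjI allI impI ballI)
  fix i j show "G i j = G j i" using G_sym by (metis mtr_def)
next
  fix x :: "'d \<Rightarrow> real" assume "\<exists>i\<in>D. x i \<noteq> 0"
  then have "\<exists>i\<in>P. mvec D Q2 x i \<noteq> 0" using Q2_inj by blast
  then obtain i where i: "i \<in> P" "mvec D Q2 x i \<noteq> 0" by blast
  have "quad_form D G x = dot D x (mvec P (mtr Q2) (mvec P S (mvec D Q2 x)))" by (simp add: quad_dot Gv)
  also have "\<dots> = quad_form P S (mvec D Q2 x)" by (simp add: quad_dot dotQ2)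
  also have "\<dots> > 0" by (rule quad_pos[where v="mvec D Q2 x", OF S_pd i(1) i(2)])
  finally show "quad_form D G x > 0" .
qed

lemma Gam_pd: "pos_def_on D Gam" and GGam: "rinv D G Gam" and GamG: "rinv D Gam G" and Gam_symm: "symm_on D Gam"
  using inv_pd[OF finD G_pd] by (auto simp: Gam_def)

lemma Gam_sym: "mtr Gam = Gam"
  unfolding Gam_def by (rule mtr_inv_on[OF finD G_pd])

lemma Gaminv: "i \<in> D \<Longrightarrow> j \<in> D \<Longrightarrow> inv_on D Gam i j = G i j"
  unfolding Gam_def by (rule inv_inv[OF finD G_pd])

lemma Psiv: "mvec E Psi x = mvec D Gam (mvec P (mtr Q2) (mvec P S (mvec E Q1 x)))"
  unfolding Psi_def by (simp add: mvec_mmul finP finD finE)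

lemma GPsi: "d \<in> D \<Longrightarrow> mvec D G (mvec E Psi x) d = mvec P (mtr Q2) (mvec P S (mvec E Q1 x)) d"
  unfolding Psiv by (rule rinv_mvec[OF finD GGam])

lemma dotPsi: "dot E x (mvec D (mtr Psi) y) = dot D (mvec E Psi x) y"
  using dot_mvec_tr[OF finE finD, of x "mtr Psi" y] by (simp add: mtr_mtr)

lemma dotG_sym: "dot D a (mvec D G b) = dot D b (mvec D G a)"
  by (rule dot_sym_on[OF finD symm_on_mtr[OF G_sym]])

lemma proj:
  "quad_form P S W = quad_form P S (\<lambda>i. W i - mvec D Q2 (mvec D Gam (mvec P (mtr Q2) (mvec P S W))) i)
     + quad_form D Gam (mvec P (mtr Q2) (mvec P S W))"
proof -
  define u where "u = mvec P (mtr Q2) (mvec P S W)"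
  define z where "z = mvec D Gam u"
  define y where "y = mvec D Q2 z"
  have symS: "symm_on P S" by (rule symm_on_mtr[OF S_sym])
  have e1: "quad_form P S (\<lambda>i. W i - y i) = quad_form P S W - 2 * dot P W (mvec P S y) + quad_form P S y"
    by (rule quad_diff_sym[OF finP symS])
  have e2: "dot P W (mvec P S y) = dot D z u"
    using Ssym_dot[of W y] by (simp add: y_def dotQ2 u_def)
  have Gz: "mvec D G z d = u d" if "d \<in> D" for d unfolding z_def by (rule rinv_mvec[OF finD GGam that])
  have e3: "quad_form P S y = dot D z u"
  proof -
    have "quad_form P S y = dot D z (mvec D G z)" by (simp add: quad_dot y_def dotQ2 Gv)
    also have "\<dots> = dot D z u" by (rule dot_cong) (auto simp: Gz)
    finally show ?thesis .
  qed
  have e4: "quad_form D Gam u = dot D z u" by (simp add: quad_dot z_def dot_comm)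
  show ?thesis using e1 e2 e3 e4 by (simp add: y_def z_def u_def)
qed

definition Lmap :: "('e \<Rightarrow> real) \<Rightarrow> 'p \<Rightarrow> real" where
  "Lmap x = (\<lambda>i. mvec E Q1 x i - mvec D Q2 (mvec E Psi x) i)"

lemma Hv: "mvec E H z = (\<lambda>i. mvec E Info z i + mvec P (mtr Q1) (mvec P S (mvec E Q1 z)) i
              - mvec D (mtr Psi) (mvec D (inv_on D Gam) (mvec E Psi z)) i)"
  unfolding H_def mvec_mat_add_diff by (simp add: mvec_mmul finP finD finE)

lemma bilH: "dot E x (mvec E H z) = dot E x (mvec E Info z) + dot P (Lmap x) (mvec P S (Lmap z))"
proof -
  have a: "dot E x (mvec E H z) = dot E x (mvec E Info z) + dot P (mvec E Q1 x) (mvec P S (mvec E Q1 z))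
            - dot D (mvec E Psi x) (mvec D (inv_on D Gam) (mvec E Psi z))"
    unfolding Hv dot_diff_r dot_add_r dotQ1 dotPsi by simp
  have b: "dot D (mvec E Psi x) (mvec D (inv_on D Gam) (mvec E Psi z)) = dot D (mvec E Psi x) (mvec D G (mvec E Psi z))"
    by (rule dot_cong) (auto intro!: mvec_cong_mat simp: Gaminv)
  have X: "dot P (mvec D Q2 (mvec E Psi a)) (mvec P S (mvec E Q1 c)) = dot D (mvec E Psi a) (mvec D G (mvec E Psi c))" for a c
  proof -
    have "dot P (mvec D Q2 (mvec E Psi a)) (mvec P S (mvec E Q1 c)) = dot D (mvec E Psi a) (mvec P (mtr Q2) (mvec P S (mvec E Q1 c)))"
      by (rule dotQ2)
    also have "\<dots> = dot D (mvec E Psi a) (mvec D G (mvec E Psi c))" by (rule dot_cong) (auto simp: GPsi)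
    finally show ?thesis .
  qed
  have c: "dot P (Lmap x) (mvec P S (Lmap z)) = dot P (mvec E Q1 x) (mvec P S (mvec E Q1 z))
        - dot P (mvec E Q1 x) (mvec P S (mvec D Q2 (mvec E Psi z)))
        - dot P (mvec D Q2 (mvec E Psi x)) (mvec P S (mvec E Q1 z))
        + dot P (mvec D Q2 (mvec E Psi x)) (mvec P S (mvec D Q2 (mvec E Psi z)))"
    unfolding Lmap_def mvec_diff_fun dot_diff_l dot_diff_r by simp
  have c1: "dot P (mvec E Q1 x) (mvec P S (mvec D Q2 (mvec E Psi z))) = dot D (mvec E Psi x) (mvec D G (mvec E Psi z))"
    using Ssym_dot X dotG_sym by metis
  have c2: "dot P (mvec D Q2 (mvec E Psi x)) (mvec P S (mvec D Q2 (mvec E Psi z))) = dot D (mvec E Psi x) (mvec D G (mvec E Psi z))"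
    by (simp add: dotQ2 Gv)
  show ?thesis using a b c c1 c2 X[of x z] by simp
qed

lemma H_symm: "symm_on E H"
  unfolding symm_on_def
proof (intro ballI)
  fix a b assume a: "a \<in> E" and b: "b \<in> E"
  define da where "da = (\<lambda>i. if i = a then 1 else (0::real))"
  define db where "db = (\<lambda>i. if i = b then 1 else (0::real))"
  have "H a b = dot E da (mvec E H db)" unfolding da_def db_def by (rule dot_delta[OF finE a b, symmetric])
  also have "\<dots> = dot E db (mvec E H da)"
    unfolding bilH using dot_sym_on[OF finE pd_symm[OF I_pd]] Ssym_dot by metis
  also have "\<dots> = H b a" unfolding da_def db_def by (rule dot_delta[OF finE b a])
  finally show "H a b = H b a" .
qed

lemma H_pd: "pos_def_on E H"
  unfolding pos_def_on_def
proof (intro conjI allI impI ballI)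
  fix i j assume "i \<in> E" "j \<in> E" then show "H i j = H j i" using H_symm by (simp add: symm_on_def)
next
  fix x :: "'e \<Rightarrow> real" assume "\<exists>i\<in>E. x i \<noteq> 0"
  then obtain i where i: "i \<in> E" "x i \<noteq> 0" by blast
  have "quad_form E H x = quad_form E Info x + quad_form P S (Lmap x)" by (simp add: quad_dot bilH)
  moreover have "quad_form E Info x > 0" by (rule quad_pos[where v=x, OF I_pd i(1) i(2)])
  moreover have "quad_form P S (Lmap x) \<ge> 0" by (rule pd_nonneg[OF S_pd])
  ultimately show "quad_form E H x > 0" by linarith
qed

lemma Th_pd: "pos_def_on E Th" and HTh: "rinv E H Th"
  using inv_pd[OF finE H_pd] by (auto simp: Th_def)

lemma Thinv: "i \<in> E \<Longrightarrow> j \<in> E \<Longrightarrow> inv_on E Th i j = H i j"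
  unfolding Th_def by (rule inv_inv[OF finE H_pd])

lemma Iinv: "i \<in> E \<Longrightarrow> j \<in> E \<Longrightarrow> inv_on E (inv_on E Info) i j = Info i j"
  by (rule inv_inv[OF finE I_pd])

lemma gauss_identity:
  fixes mu :: "'e \<Rightarrow> real" and r :: "'p \<Rightarrow> real"
  defines "tau \<equiv> (\<lambda>i. - mvec D Gam (mvec P (mtr Q2) (mvec P S r)) i)"
  defines "kap \<equiv> mvec E Th (\<lambda>a. mvec D (mtr Psi) (mvec D (inv_on D Gam) tau) a + mvec P (mtr Q1) (mvec P S r) a)"
  shows "\<exists>c. \<forall>b B. quad_form E (inv_on E (inv_on E Info)) (\<lambda>i. b i - mu i)
            + quad_form P S (\<lambda>i. - mvec E Q1 b i + mvec D Q2 B i + r i)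
         = quad_form E (inv_on E Th) (\<lambda>i. b i - (mvec E (mmul E Th Info) mu i + kap i))
            + quad_form D (inv_on D Gam) (\<lambda>i. B i - (mvec E Psi b i + tau i)) + c"
proof -
  define Y where "Y = (\<lambda>a. mvec D (mtr Psi) (mvec D (inv_on D Gam) tau) a + mvec P (mtr Q1) (mvec P S r) a)"
  define m where "m = (\<lambda>i. mvec E (mmul E Th Info) mu i + kap i)"
  define s where "s = (\<lambda>i. r i + mvec D Q2 tau i)"
  have symS: "symm_on P S" by (rule symm_on_mtr[OF S_sym])
  have symI: "symm_on E Info" by (rule pd_symm[OF I_pd])
  have m_eq: "m = mvec E Th (\<lambda>a. mvec E Info mu a + Y a)"
    unfolding m_def kap_def Y_def[symmetric] mvec_add_fun by (simp add: mvec_mmul finE)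
  have Hm: "mvec E H m a = mvec E Info mu a + Y a" if "a \<in> E" for a
    unfolding m_eq by (rule rinv_mvec[OF finE HTh that])
  have Gtau: "mvec D G tau d = - mvec P (mtr Q2) (mvec P S r) d" if "d \<in> D" for d
    unfolding tau_def mvec_neg_fun using rinv_mvec[OF finD GGam that] by simp
  have Ylem: "dot E b Y = dot P (Lmap b) (mvec P S s)" for b
  proof -
    have y1: "dot E b Y = dot D (mvec E Psi b) (mvec D G tau) + dot P (mvec E Q1 b) (mvec P S r)"
    proof -
      have "dot E b Y = dot D (mvec E Psi b) (mvec D (inv_on D Gam) tau) + dot P (mvec E Q1 b) (mvec P S r)"
        unfolding Y_def dot_add_r dotPsi dotQ1 by simp
      also have "dot D (mvec E Psi b) (mvec D (inv_on D Gam) tau) = dot D (mvec E Psi b) (mvec D G tau)"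
        by (rule dot_cong) (auto intro!: mvec_cong_mat simp: Gaminv)
      finally show ?thesis .
    qed
    have y2: "dot P (Lmap b) (mvec P S s) = dot P (mvec E Q1 b) (mvec P S r) + dot P (mvec E Q1 b) (mvec P S (mvec D Q2 tau))
        - dot P (mvec D Q2 (mvec E Psi b)) (mvec P S r) - dot P (mvec D Q2 (mvec E Psi b)) (mvec P S (mvec D Q2 tau))"
      unfolding Lmap_def s_def mvec_add_fun dot_diff_l dot_add_r by simp
    have y3: "dot P (mvec E Q1 b) (mvec P S (mvec D Q2 tau)) = dot D (mvec E Psi b) (mvec D G tau)"
    proof -
      have "dot P (mvec E Q1 b) (mvec P S (mvec D Q2 tau)) = dot P (mvec D Q2 tau) (mvec P S (mvec E Q1 b))"
        by (rule Ssym_dot)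
      also have "\<dots> = dot D tau (mvec P (mtr Q2) (mvec P S (mvec E Q1 b)))" by (rule dotQ2)
      also have "\<dots> = dot D tau (mvec D G (mvec E Psi b))" by (rule dot_cong) (auto simp: GPsi)
      also have "\<dots> = dot D (mvec E Psi b) (mvec D G tau)" by (rule dotG_sym)
      finally show ?thesis .
    qed
    have y4: "dot P (mvec D Q2 (mvec E Psi b)) (mvec P S r) = - dot D (mvec E Psi b) (mvec D G tau)"
    proof -
      have "dot P (mvec D Q2 (mvec E Psi b)) (mvec P S r) = dot D (mvec E Psi b) (mvec P (mtr Q2) (mvec P S r))"
        by (rule dotQ2)
      also have "\<dots> = dot D (mvec E Psi b) (\<lambda>d. - mvec D G tau d)" by (rule dot_cong) (auto simp: Gtau)
      finally show ?thesis by (simp add: dot_neg_r)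
    qed
    have y5: "dot P (mvec D Q2 (mvec E Psi b)) (mvec P S (mvec D Q2 tau)) = dot D (mvec E Psi b) (mvec D G tau)"
      by (simp add: dotQ2 Gv)
    show ?thesis using y1 y2 y3 y4 y5 by simp
  qed
  define c where "c = quad_form E Info mu + quad_form P S s - quad_form E H m"
  show ?thesis
  proof (intro exI allI)
    fix b B
    define W where "W = (\<lambda>i. - mvec E Q1 b i + mvec D Q2 B i + r i)"
    define u where "u = mvec P (mtr Q2) (mvec P S W)"
    have u_eq: "u = (\<lambda>i. - mvec P (mtr Q2) (mvec P S (mvec E Q1 b)) i + mvec D G B i + mvec P (mtr Q2) (mvec P S r) i)"
      unfolding u_def W_def mvec_add_fun mvec_neg_fun Gv by simp
    have A: "B d - (mvec E Psi b d + tau d) = mvec D Gam u d" if d: "d \<in> D" for d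
    proof -
      have "mvec D Gam u d = - mvec E Psi b d + mvec D Gam (mvec D G B) d + mvec D Gam (mvec P (mtr Q2) (mvec P S r)) d"
        unfolding u_eq mvec_add_fun mvec_neg_fun Psiv by simp
      also have "mvec D Gam (mvec D G B) d = B d" by (rule rinv_mvec[OF finD GamG d])
      finally show ?thesis by (simp add: tau_def)
    qed
    have q4: "quad_form D (inv_on D Gam) (\<lambda>i. B i - (mvec E Psi b i + tau i)) = quad_form D Gam u"
    proof -
      have "quad_form D (inv_on D Gam) (\<lambda>i. B i - (mvec E Psi b i + tau i)) = quad_form D G (mvec D Gam u)"
        using A Gaminv by (auto intro!: quad_cong quad_cong_mat trans[OF quad_cong_mat quad_cong])
      also have "\<dots> = dot D (mvec D Gam u) (mvec D G (mvec D Gam u))" by (rule quad_dot)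
      also have "\<dots> = dot D (mvec D Gam u) u" by (rule dot_cong) (auto intro: rinv_mvec[OF finD GGam])
      also have "\<dots> = quad_form D Gam u" by (simp add: quad_dot dot_comm)
      finally show ?thesis .
    qed
    have Dst: "(\<lambda>i. W i - mvec D Q2 (mvec D Gam u) i) = (\<lambda>i. s i - Lmap b i)"
    proof (rule ext)
      fix i
      have "mvec D Q2 (mvec D Gam u) i = mvec D Q2 (\<lambda>d. B d - (mvec E Psi b d + tau d)) i"
        by (rule mvec_cong) (simp add: A)
      also have "\<dots> = mvec D Q2 B i - (mvec D Q2 (mvec E Psi b) i + mvec D Q2 tau i)"
        by (simp add: mvec_diff mvec_add)
      finally show "W i - mvec D Q2 (mvec D Gam u) i = s i - Lmap b i"
        by (simp add: W_def s_def Lmap_def)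
    qed
    have qW: "quad_form P S W = quad_form P S (\<lambda>i. s i - Lmap b i) + quad_form D Gam u"
      using proj[of W] unfolding u_def[symmetric] Dst .
    have q1: "quad_form E (inv_on E (inv_on E Info)) (\<lambda>i. b i - mu i) = quad_form E Info b - 2 * dot E b (mvec E Info mu) + quad_form E Info mu"
      using Iinv quad_diff_sym[OF finE symI] by (metis quad_cong_mat)
    have q2: "quad_form P S (\<lambda>i. s i - Lmap b i) = quad_form P S s - 2 * dot P (Lmap b) (mvec P S s) + quad_form P S (Lmap b)"
      using quad_diff_sym[OF finP symS, of s "Lmap b"] Ssym_dot by simp
    have q3: "quad_form E (inv_on E Th) (\<lambda>i. b i - m i) = quad_form E H b - 2 * dot E b (mvec E H m) + quad_form E H m"
      using Thinv quad_diff_sym[OF finE H_symm] by (metis quad_cong_mat)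
    have hb: "quad_form E H b = quad_form E Info b + quad_form P S (Lmap b)" by (simp add: quad_dot bilH)
    have hbm: "dot E b (mvec E H m) = dot E b (mvec E Info mu) + dot E b Y"
    proof -
      have "dot E b (mvec E H m) = dot E b (\<lambda>a. mvec E Info mu a + Y a)" by (rule dot_cong) (auto simp: Hm)
      then show ?thesis by (simp add: dot_add_r)
    qed
    show "quad_form E (inv_on E (inv_on E Info)) (\<lambda>i. b i - mu i)
            + quad_form P S (\<lambda>i. - mvec E Q1 b i + mvec D Q2 B i + r i)
         = quad_form E (inv_on E Th) (\<lambda>i. b i - (mvec E (mmul E Th Info) mu i + kap i))
            + quad_form D (inv_on D Gam) (\<lambda>i. B i - (mvec E Psi b i + tau i)) + c"
    proof -
      have mm: "(\<lambda>i. b i - (mvec E (mmul E Th Info) mu i + kap i)) = (\<lambda>i. b i - m i)" by (simp add: m_def)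
      show ?thesis unfolding mm W_def[symmetric] using q1 q2 q3 q4 qW hb hbm Ylem[of b] unfolding c_def by simp
    qed
  qed
qed

end


lemma sum_restrict_sub: "finite I \<Longrightarrow> J \<subseteq> I \<Longrightarrow> (\<Sum>i\<in>I. if i \<in> J then f i else 0) = (\<Sum>i\<in>J. f i :: real)"
proof -
  assume "finite I" "J \<subseteq> I"
  then have "I \<inter> J = J" by auto
  then show ?thesis using sum.inter_restrict[OF \<open>finite I\<close>, of f J] by simp
qed

lemma sum_Sigma': "finite A \<Longrightarrow> \<forall>a\<in>A. finite (B a) \<Longrightarrow> (\<Sum>d\<in>Sigma A B. f d) = (\<Sum>a\<in>A. \<Sum>b\<in>B a. (f (a,b) :: real))"
  using sum.Sigma[of A B "\<lambda>a b. f (a,b)"] by simp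

lemma pd_subset:
  assumes fin: "finite I" and sub: "J \<subseteq> I" and pd: "pos_def_on I M"
  shows "pos_def_on J M"
  unfolding pos_def_on_def
proof (intro conjI allI impI ballI)
  fix i j assume "i \<in> J" "j \<in> J" then show "M i j = M j i" using pd sub unfolding pos_def_on_def by blast
next
  fix v :: "_ \<Rightarrow> real" assume "\<exists>i\<in>J. v i \<noteq> 0"
  then obtain i where i: "i \<in> J" "v i \<noteq> 0" by blast
  define w where "w = (\<lambda>i. if i \<in> J then v i else 0)"
  have "quad_form I M w = quad_form J M v"
  proof -
    have "quad_form I M w = (\<Sum>a\<in>I. if a \<in> J then (\<Sum>b\<in>I. if b \<in> J then v a * M a b * v b else 0) else 0)"
      unfolding quad_form_def w_def by (auto intro!: sum.cong)
    also have "\<dots> = (\<Sum>a\<in>J. \<Sum>b\<in>J. v a * M a b * v b)"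
      using sum_restrict_sub[OF fin sub] by simp
    finally show ?thesis unfolding quad_form_def .
  qed
  moreover have "quad_form I M w > 0"
    using i sub by (intro quad_pos[where v=w, OF pd, of i]) (auto simp: w_def)
  ultimately show "quad_form J M v > 0" by simp
qed

lemma mvec_mat_diff: "mvec J (\<lambda>a b. A a b - B a b) z = (\<lambda>i. mvec J A z i - mvec J B z i)"
  unfolding mvec_def by (rule ext) (simp add: left_diff_distrib sum_subtractf)

lemma schur_pd:
  assumes Jdef: "J = {..<p}" and sub: "E \<subseteq> J" and pd: "pos_def_on J Info"
  shows "pos_def_on (J - E) (schur E Info)"
proof -
  define F where "F = J - E"
  have finJ: "finite J" using Jdef by simp
  have finE: "finite E" using finite_subset[OF sub finJ] .
  have finF: "finite F" using finJ by (simp add: F_def)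
  have pdE: "pos_def_on E Info" by (rule pd_subset[OF finJ sub pd])
  define T where "T = inv_on E Info"
  have rT: "rinv E Info T" and sT: "symm_on E T" using inv_pd[OF finE pdE] by (auto simp: T_def)
  have symJ: "\<And>i j. i \<in> J \<Longrightarrow> j \<in> J \<Longrightarrow> Info i j = Info j i" using pd unfolding pos_def_on_def by blast
  have schur_eq: "schur E Info = (\<lambda>i j. Info i j - mmul E Info (mmul E T Info) i j)"
    by (intro ext) (simp add: schur_def mmul_def sum_distrib_left mult.assoc T_def)
  have msym: "mmul E Info (mmul E T Info) i j = mmul E Info (mmul E T Info) j i" if i: "i \<in> J" and j: "j \<in> J" for i j
  proof -
    have "mmul E Info (mmul E T Info) i j = (\<Sum>b\<in>E. (\<Sum>a\<in>E. Info i a * T a b) * Info b j)"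
      unfolding mmul_def by (rule sum_swap_mult)
    also have "\<dots> = (\<Sum>b\<in>E. Info j b * (\<Sum>a\<in>E. T b a * Info a i))"
    proof (intro sum.cong refl)
      fix b assume b: "b \<in> E"
      have "(\<Sum>a\<in>E. Info i a * T a b) = (\<Sum>a\<in>E. T b a * Info a i)"
      proof (intro sum.cong refl)
        fix a assume a: "a \<in> E"
        have "Info i a = Info a i" using symJ[OF i] a sub by blast
        moreover have "T a b = T b a" using sT a b by (simp add: symm_on_def)
        ultimately show "Info i a * T a b = T b a * Info a i" by simp
      qed
      moreover have "Info b j = Info j b" using symJ[OF _ j] b sub by blast
      ultimately show "(\<Sum>a\<in>E. Info i a * T a b) * Info b j = Info j b * (\<Sum>a\<in>E. T b a * Info a i)" by simp
    qed
    also have "\<dots> = mmul E Info (mmul E T Info) j i" unfolding mmul_def by simp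
    finally show ?thesis .
  qed
  show ?thesis
    unfolding F_def[symmetric] pos_def_on_def
  proof (intro conjI allI impI ballI)
    fix i j assume "i \<in> F" "j \<in> F"
    then show "schur E Info i j = schur E Info j i" unfolding schur_eq using msym symJ by (auto simp: F_def)
  next
    fix v :: "nat \<Rightarrow> real" assume "\<exists>i\<in>F. v i \<noteq> 0"
    then obtain f0 where f0: "f0 \<in> F" "v f0 \<noteq> 0" by blast
    define y where "y = mvec F Info v"
    define z where "z = mvec E T y"
    define w where "w = (\<lambda>i. if i \<in> E then - z i else if i \<in> F then v i else 0)"
    have JEF: "J = E \<union> F" "E \<inter> F = {}" using sub by (auto simp: F_def)
    have qpos: "quad_form J Info w > 0"
      using f0 by (intro quad_pos[where v=w, OF pd, of f0]) (auto simp: w_def F_def)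
    have mvJ: "mvec J Info w i = - mvec E Info z i + y i" for i
    proof -
      have "mvec J Info w i = (\<Sum>j\<in>E. Info i j * w j) + (\<Sum>j\<in>F. Info i j * w j)"
        unfolding mvec_def JEF(1) by (rule sum.union_disjoint[OF finE finF JEF(2)])
      also have "(\<Sum>j\<in>E. Info i j * w j) = - mvec E Info z i"
        unfolding mvec_def w_def by (simp add: sum_negf[symmetric])
      also have "(\<Sum>j\<in>F. Info i j * w j) = y i"
        unfolding y_def mvec_def w_def using JEF(2) by (intro sum.cong) auto
      finally show ?thesis .
    qed
    have dJ: "dot J w X = - dot E z X + dot F v X" for X
    proof -
      have "dot J w X = (\<Sum>j\<in>E. w j * X j) + (\<Sum>j\<in>F. w j * X j)"
        unfolding dot_def JEF(1) by (rule sum.union_disjoint[OF finE finF JEF(2)])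
      also have "(\<Sum>j\<in>E. w j * X j) = - dot E z X"
        unfolding dot_def w_def by (simp add: sum_negf[symmetric])
      also have "(\<Sum>j\<in>F. w j * X j) = dot F v X"
        unfolding dot_def w_def using JEF(2) by (intro sum.cong) auto
      finally show ?thesis .
    qed
    have Iz: "mvec E Info z a = y a" if "a \<in> E" for a unfolding z_def by (rule rinv_mvec[OF finE rT that])
    have e1: "dot E z (mvec E Info z) = dot E z y" by (rule dot_cong) (auto simp: Iz)
    have e2: "dot F v (mvec E Info z) = dot E z y"
    proof -
      have "dot F v (mvec E Info z) = dot E (mvec F (mtr Info) v) z" by (rule dot_mvec_tr[OF finF finE])
      also have "\<dots> = dot E y z"
        unfolding y_def using symJ sub by (intro dot_cong refl mvec_cong_mat) (auto simp: mtr_def F_def)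
      finally show ?thesis by (simp add: dot_comm)
    qed
    have qJ: "quad_form J Info w = quad_form F Info v - dot E z y"
    proof -
      have "quad_form J Info w = - dot E z (\<lambda>i. - mvec E Info z i + y i) + dot F v (\<lambda>i. - mvec E Info z i + y i)"
        unfolding quad_dot dJ mvJ ..
      also have "\<dots> = dot E z (mvec E Info z) - dot E z y - dot F v (mvec E Info z) + dot F v y"
        by (simp add: dot_add_r dot_neg_r dot_diff_r)
      finally show ?thesis using e1 e2 by (simp add: quad_dot y_def)
    qed
    have qS: "quad_form F (schur E Info) v = quad_form F Info v - dot E z y"
    proof -
      have "quad_form F (schur E Info) v = dot F v (\<lambda>i. mvec F Info v i - mvec F (mmul E Info (mmul E T Info)) v i)"
        unfolding quad_dot schur_eq mvec_mat_diff ..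
      also have "\<dots> = quad_form F Info v - dot F v (mvec E Info z)"
        by (simp add: dot_diff_r quad_dot mvec_mmul finE finF z_def y_def)
      finally show ?thesis using e2 by simp
    qed
    show "quad_form F (schur E Info) v > 0" using qpos qJ qS by simp
  qed
qed

lemma Q2_inj:
  assumes pd: "pos_def_on {..<p} Info" and Ek_sub: "\<forall>k\<in>{1..K}. Ek k \<subseteq> {..<p}"
    and h: "\<forall>i\<in>PKset K p. mvec (Dset K Ek) (Q2 Info) x i = 0"
  shows "\<forall>d\<in>Dset K Ek. x d = 0"
proof
  fix d assume "d \<in> Dset K Ek"
  then obtain k e where d: "d = (k,e)" "k \<in> {1..K}" "e \<in> Ek k" by (auto simp: Dset_def)
  define xk where "xk = (\<lambda>e. if e \<in> Ek k then x (k,e) else 0)"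
  have finEk: "\<forall>k'\<in>{1..K}. finite (Ek k')" using Ek_sub finite_subset by blast
  have mv: "mvec {..<p} Info xk j = 0" if j: "j < p" for j
  proof -
    have "mvec (Dset K Ek) (Q2 Info) x (k,j) = (\<Sum>k'\<in>{1..K}. \<Sum>e'\<in>Ek k'. Q2 Info (k,j) (k',e') * x (k',e'))"
      unfolding mvec_def Dset_def by (rule sum_Sigma'[OF _ finEk]) simp
    also have "\<dots> = (\<Sum>k'\<in>{1..K}. if k' = k then (\<Sum>e'\<in>Ek k. Info j e' * x (k,e')) else 0)"
      by (intro sum.cong refl) (auto simp: Q2_def)
    also have "\<dots> = (\<Sum>e'\<in>Ek k. Info j e' * x (k,e'))" using d(2) by simp
    also have "\<dots> = mvec {..<p} Info xk j"
      unfolding mvec_def xk_def using sum_restrict_sub[of "{..<p}" "Ek k" "\<lambda>e'. Info j e' * x (k,e')"] Ek_sub d(2)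
      by (simp add: if_distrib cong: if_cong)
    finally show ?thesis using h j d(2) by (simp add: PKset_def)
  qed
  have "quad_form {..<p} Info xk = 0" by (simp add: quad_dot dot_def mv)
  moreover have "e < p" using Ek_sub d by blast
  ultimately have "xk e = 0" using quad_pos[where v=xk, OF pd, of e] by fastforce
  then show "x d = 0" using d by (simp add: xk_def)
qed

lemma dot_sum_l: "dot J (\<lambda>j. \<Sum>k\<in>Ks. f k j) y = (\<Sum>k\<in>Ks. dot J (f k) y)"
  unfolding dot_def sum_distrib_right by (rule sum.swap)
lemma mvec_sum: "mvec J M (\<lambda>j. \<Sum>k\<in>Ks. f k j) = (\<lambda>i. \<Sum>k\<in>Ks. mvec J M (f k) i)"
  unfolding mvec_def sum_distrib_left by (rule ext) (rule sum.swap)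
lemma dot_sum_r: "dot J x (\<lambda>i. \<Sum>k\<in>Ks. g k i) = (\<Sum>k\<in>Ks. dot J x (g k))"
  unfolding dot_def sum_distrib_left by (rule sum.swap)
lemma mvec_scale_fun: "mvec J M (\<lambda>j. c * x j) = (\<lambda>i. c * mvec J M x i)"
  by (rule ext) (rule mvec_scale)

lemma SigmaOmega_pd:
  assumes pd: "pos_def_on {..<p} Info" and rpos: "\<forall>k\<in>{1..K}. \<rho> k > 0" and rsum: "(\<Sum>k\<in>{1..K}. \<rho> k) < 1"
  shows "pos_def_on (PKset K p) (SigmaOmega \<rho> Info)"
proof -
  define J where "J = {..<p}"
  define Ks where "Ks = {1..K}"
  have finJ: "finite J" and finK: "finite Ks" by (auto simp: J_def Ks_def)
  have pdJ: "pos_def_on J Info" using pd by (simp add: J_def)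
  have symI: "symm_on J Info" by (rule pd_symm[OF pdJ])
  define bI where "bI x y = dot J x (mvec J Info y)" for x y
  define q where "q x = quad_form J Info x" for x
  have q_bI: "q x = bI x x" for x by (simp add: q_def bI_def quad_dot)
  have q_nonneg: "q x \<ge> 0" for x unfolding q_def by (rule pd_nonneg[OF pdJ])
  define vk where "vk v k = (\<lambda>j. v (k,j))" for v :: "nat \<times> nat \<Rightarrow> real" and k
  define sv where "sv v = (\<lambda>j. \<Sum>k\<in>Ks. v (k,j))" for v :: "nat \<times> nat \<Rightarrow> real"
  define r0 where "r0 = 1 - (\<Sum>k\<in>Ks. \<rho> k)"
  have r0_pos: "r0 > 0" using rsum by (simp add: r0_def Ks_def)
  have rp: "\<rho> k > 0" if "k \<in> Ks" for k using rpos that by (simp add: Ks_def)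
  have QF: "quad_form (PKset K p) (SigmaOmega \<rho> Info) v
      = (\<Sum>k\<in>Ks. \<Sum>k'\<in>Ks. ((if k = k' then 1 / \<rho> k else 0) - 1) * bI (vk v k) (vk v k'))" for v
  proof -
    have "quad_form (PKset K p) (SigmaOmega \<rho> Info) v
        = (\<Sum>k\<in>Ks. \<Sum>j\<in>J. \<Sum>k'\<in>Ks. \<Sum>j'\<in>J. v (k,j) * SigmaOmega \<rho> Info (k,j) (k',j') * v (k',j'))"
      by (simp only: quad_form_def PKset_def Ks_def[symmetric] J_def[symmetric] sum.cartesian_product')
    also have "\<dots> = (\<Sum>k\<in>Ks. \<Sum>k'\<in>Ks. \<Sum>j\<in>J. \<Sum>j'\<in>J. v (k,j) * SigmaOmega \<rho> Info (k,j) (k',j') * v (k',j'))"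
      by (rule sum.cong[OF refl]) (rule sum.swap)
    also have "\<dots> = (\<Sum>k\<in>Ks. \<Sum>k'\<in>Ks. ((if k = k' then 1 / \<rho> k else 0) - 1) * bI (vk v k) (vk v k'))"
      unfolding bI_def dot_def mvec_def SigmaOmega_def vk_def
      by (intro sum.cong refl) (simp add: sum_distrib_left mult_ac)
    finally show ?thesis .
  qed
  have S1: "(\<Sum>k\<in>Ks. \<Sum>k'\<in>Ks. ((if k = k' then 1 / \<rho> k else 0) - 1) * b k k')
      = (\<Sum>k\<in>Ks. (1 / \<rho> k) * b k k) - (\<Sum>k\<in>Ks. \<Sum>k'\<in>Ks. b k k')" for b :: "nat \<Rightarrow> nat \<Rightarrow> real"
  proof -
    have "(\<Sum>k'\<in>Ks. ((if k = k' then 1 / \<rho> k else 0) - 1) * b k k') = (1 / \<rho> k) * b k k - (\<Sum>k'\<in>Ks. b k k')"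
      if k: "k \<in> Ks" for k
    proof -
      have "(\<Sum>k'\<in>Ks. ((if k = k' then 1 / \<rho> k else 0) - 1) * b k k')
          = (\<Sum>k'\<in>Ks. (if k = k' then 1 / \<rho> k * b k k' else 0)) - (\<Sum>k'\<in>Ks. b k k')"
      proof -
        have "(\<Sum>k'\<in>Ks. ((if k = k' then 1 / \<rho> k else 0) - 1) * b k k')
            = (\<Sum>k'\<in>Ks. (if k = k' then 1 / \<rho> k * b k k' else 0) - b k k')"
          by (intro sum.cong refl) (auto simp: left_diff_distrib)
        then show ?thesis by (simp only: sum_subtractf)
      qed
      also have "(\<Sum>k'\<in>Ks. (if k = k' then 1 / \<rho> k * b k k' else 0)) = 1 / \<rho> k * b k k"
        using finK k by simp
      finally show ?thesis .
    qed
    then show ?thesis by (simp add: sum_subtractf)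
  qed
  have S2: "(\<Sum>k\<in>Ks. \<Sum>k'\<in>Ks. bI (vk v k) (vk v k')) = q (sv v)" for v
    unfolding q_bI bI_def sv_def dot_sum_l mvec_sum dot_sum_r vk_def ..
  have S3: "(\<Sum>k\<in>Ks. bI (vk v k) (sv v)) = q (sv v)" for v
    unfolding q_bI bI_def sv_def dot_sum_l vk_def ..
  have S4: "q (\<lambda>j. x j - c * y j) = q x - 2 * c * bI x y + c * c * q y" for x y c
    unfolding q_def bI_def quad_diff_sym[OF finJ symI]
    by (simp add: quad_dot mvec_scale_fun dot_scale_l dot_scale_r)
  have ident: "(\<Sum>k\<in>Ks. (1 / \<rho> k) * q (vk v k)) - q (sv v)
      = (\<Sum>k\<in>Ks. (1 / \<rho> k) * q (\<lambda>j. vk v k j - \<rho> k * sv v j)) + r0 * q (sv v)" for v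
  proof -
    have "(\<Sum>k\<in>Ks. (1 / \<rho> k) * q (\<lambda>j. vk v k j - \<rho> k * sv v j))
        = (\<Sum>k\<in>Ks. (1 / \<rho> k) * q (vk v k) - 2 * bI (vk v k) (sv v) + \<rho> k * q (sv v))"
    proof (intro sum.cong refl)
      fix k assume "k \<in> Ks"
      then have "\<rho> k > 0" by (rule rp)
      then show "(1 / \<rho> k) * q (\<lambda>j. vk v k j - \<rho> k * sv v j)
          = (1 / \<rho> k) * q (vk v k) - 2 * bI (vk v k) (sv v) + \<rho> k * q (sv v)"
        unfolding S4 by (simp add: field_simps)
    qed
    also have "\<dots> = (\<Sum>k\<in>Ks. (1 / \<rho> k) * q (vk v k)) - 2 * (\<Sum>k\<in>Ks. bI (vk v k) (sv v)) + (\<Sum>k\<in>Ks. \<rho> k) * q (sv v)"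
      by (simp add: sum.distrib sum_subtractf sum_distrib_left sum_distrib_right)
    finally show ?thesis unfolding S3 r0_def by (simp add: algebra_simps)
  qed
  show ?thesis
    unfolding pos_def_on_def
  proof (intro conjI allI impI ballI)
    fix a b assume "a \<in> PKset K p" "b \<in> PKset K p"
    then show "SigmaOmega \<rho> Info a b = SigmaOmega \<rho> Info b a"
      using symI by (auto simp: SigmaOmega_def PKset_def J_def symm_on_def split: prod.splits)
  next
    fix v :: "nat \<times> nat \<Rightarrow> real" assume "\<exists>i\<in>PKset K p. v i \<noteq> 0"
    then obtain k0 j0 where k0: "k0 \<in> Ks" "j0 \<in> J" "v (k0,j0) \<noteq> 0" by (auto simp: PKset_def Ks_def J_def)
    have qf: "quad_form (PKset K p) (SigmaOmega \<rho> Info) v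
        = (\<Sum>k\<in>Ks. (1 / \<rho> k) * q (\<lambda>j. vk v k j - \<rho> k * sv v j)) + r0 * q (sv v)"
      unfolding QF S1 S2 q_bI[symmetric] ident ..
    have tnn: "(1 / \<rho> k) * q (\<lambda>j. vk v k j - \<rho> k * sv v j) \<ge> 0" if "k \<in> Ks" for k
      using rp[OF that] q_nonneg by simp
    show "quad_form (PKset K p) (SigmaOmega \<rho> Info) v > 0"
    proof (cases "\<exists>j\<in>J. sv v j \<noteq> 0")
      case True
      then obtain j where j: "j \<in> J" "sv v j \<noteq> 0" by blast
      have "q (sv v) > 0" unfolding q_def by (rule quad_pos[where v="sv v", OF pdJ j(1) j(2)])
      then have "r0 * q (sv v) > 0" using r0_pos by simp
      moreover have "(\<Sum>k\<in>Ks. (1 / \<rho> k) * q (\<lambda>j. vk v k j - \<rho> k * sv v j)) \<ge> 0"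
        using tnn by (simp add: sum_nonneg)
      ultimately show ?thesis unfolding qf by linarith
    next
      case False
      have "q (\<lambda>j. vk v k0 j - \<rho> k0 * sv v j) = q (vk v k0)"
        unfolding q_def using False by (intro quad_cong) simp
      also have "\<dots> > 0" unfolding q_def by (rule quad_pos[where v="vk v k0", OF pdJ k0(2)]) (simp add: vk_def k0(3))
      finally have "(1 / \<rho> k0) * q (\<lambda>j. vk v k0 j - \<rho> k0 * sv v j) > 0" using rp[OF k0(1)] by simp
      moreover have "(1 / \<rho> k0) * q (\<lambda>j. vk v k0 j - \<rho> k0 * sv v j)
          \<le> (\<Sum>k\<in>Ks. (1 / \<rho> k) * q (\<lambda>j. vk v k j - \<rho> k * sv v j))"
        by (rule member_le_sum[OF k0(1)]) (use tnn finK in auto)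
      moreover have "r0 * q (sv v) \<ge> 0" using r0_pos q_nonneg by simp
      ultimately show ?thesis unfolding qf by linarith
    qed
  qed
qed

lemma main2:
  fixes K p n :: nat and \<rho> :: "nat \<Rightarrow> real" and Info :: "nat \<Rightarrow> nat \<Rightarrow> real" and Ek :: "nat \<Rightarrow> nat set"
    and E mE :: "nat set" and D P :: "(nat \<times> nat) set" and beta :: "nat \<Rightarrow> real" and lam :: "nat \<Rightarrow> real"
    and S Z :: "nat \<times> nat \<rightharpoonup> real"
  assumes E_def: "E = (\<Union>k\<in>{1..K}. Ek k)" and mE_def: "mE = {..<p} - E" and D_def: "D = Dset K Ek"
    and P_def: "P = PKset K p"
    and Ek_sub: "\<forall>k\<in>{1..K}. Ek k \<subseteq> {..<p}" and pd: "pos_def_on {..<p} Info"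
    and rpos: "\<forall>k\<in>{1..K}. \<rho> k > 0" and rsum: "(\<Sum>k\<in>{1..K}. \<rho> k) < 1"
  shows "\<forall>v :: nat \<Rightarrow> real. \<exists>C > 0. \<forall>(b :: nat \<Rightarrow> real) (B :: nat \<times> nat \<Rightarrow> real).
          gauss_density E (\<lambda>a. sqrt (real n) * beta a) (inv_on E Info) b
          * gauss_density mE (\<lambda>_. 0) (schur E Info) v
          * gauss_density P (\<lambda>_. 0) (SigmaOmega \<rho> Info)
              (\<lambda>i. - mvec E (Q1 Info) b i + mvec D (Q2 Info) B i + rV K Ek lam S Z v i)
          = C * gauss_density E
                  (\<lambda>a. mvec E (PiM K p \<rho> Info Ek) (\<lambda>e. sqrt (real n) * beta e) a + kappaV K p \<rho> Info Ek (rV K Ek lam S Z v) a)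
                  (ThetaM K p \<rho> Info Ek) b
              * gauss_density D
                  (\<lambda>d. mvec E (PsiM K p \<rho> Info Ek) b d + tauV K p \<rho> Info Ek (rV K Ek lam S Z v) d)
                  (GammaM K p \<rho> Info Ek) B"
proof
  fix v :: "nat \<Rightarrow> real"
  have Esub: "E \<subseteq> {..<p}" using Ek_sub by (auto simp: E_def)
  have finE: "finite E" using finite_subset[OF Esub] by simp
  have finP: "finite P" by (simp add: P_def PKset_def)
  have DsubP: "D \<subseteq> P" using Ek_sub by (auto simp: D_def P_def Dset_def PKset_def)
  have finD: "finite D" using finite_subset[OF DsubP finP] .
  have finmE: "finite mE" by (simp add: mE_def)
  have SO_pd: "pos_def_on P (SigmaOmega \<rho> Info)" unfolding P_def by (rule SigmaOmega_pd[OF pd rpos rsum])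
  define S' where "S' = SigInv K p \<rho> Info"
  have S'_eq: "S' = inv_on P (SigmaOmega \<rho> Info)" by (simp add: S'_def SigInv_def P_def)
  have S'_pd: "pos_def_on P S'" unfolding S'_eq by (rule inv_pd(1)[OF finP SO_pd])
  have S'_sym: "mtr S' = S'" unfolding S'_eq by (rule mtr_inv_on[OF finP SO_pd])
  have I_pd: "pos_def_on E Info" by (rule pd_subset[OF _ Esub pd]) simp
  have Q2inj: "\<And>x. (\<forall>i\<in>P. mvec D (Q2 Info) x i = 0) \<Longrightarrow> \<forall>d\<in>D. x d = 0"
    unfolding D_def P_def by (rule Q2_inj[OF pd Ek_sub]) simp
  define G where "G = mmul P (mtr (Q2 Info)) (mmul P S' (Q2 Info))"
  define Gam where "Gam = GammaM K p \<rho> Info Ek"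
  define Psi where "Psi = PsiM K p \<rho> Info Ek"
  define H where "H = (\<lambda>a b. Info a b + mmul P (mtr (Q1 Info)) (mmul P S' (Q1 Info)) a b
                          - mmul D (mtr Psi) (mmul D (inv_on D Gam) Psi) a b)"
  define Th where "Th = ThetaM K p \<rho> Info Ek"
  have Gam_eq: "Gam = inv_on D G" by (simp add: Gam_def GammaM_def G_def D_def P_def S'_def)
  have Psi_eq: "Psi = mmul D Gam (mmul P (mtr (Q2 Info)) (mmul P S' (Q1 Info)))"
    by (simp add: Psi_def PsiM_def Gam_def D_def P_def S'_def)
  have Th_eq: "Th = inv_on E H"
    by (simp add: Th_def ThetaM_def H_def Let_def E_def D_def P_def S'_def Psi_def Gam_def)
  note hyps = finE finD finP S'_pd S'_sym I_pd Q2inj G_def Gam_eq Psi_eq H_def Th_eq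
  define r where "r = rV K Ek lam S Z v"
  define mu where "mu = (\<lambda>a. sqrt (real n) * beta a)"
  have tau_eq: "tauV K p \<rho> Info Ek r = (\<lambda>i. - mvec D Gam (mvec P (mtr (Q2 Info)) (mvec P S' r)) i)"
    by (simp add: tauV_def Gam_def D_def P_def S'_def)
  have kap_eq: "kappaV K p \<rho> Info Ek r = mvec E Th (\<lambda>a. mvec D (mtr Psi) (mvec D (inv_on D Gam)
          (\<lambda>i. - mvec D Gam (mvec P (mtr (Q2 Info)) (mvec P S' r)) i)) a + mvec P (mtr (Q1 Info)) (mvec P S' r) a)"
    unfolding tau_eq[symmetric] by (simp add: kappaV_def Let_def E_def D_def P_def S'_def Psi_def Gam_def Th_def)
  have Pi_eq: "PiM K p \<rho> Info Ek = mmul E Th Info" by (simp add: PiM_def E_def Th_def)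
  obtain c where c: "\<And>b B. quad_form E (inv_on E (inv_on E Info)) (\<lambda>i. b i - mu i)
            + quad_form P S' (\<lambda>i. - mvec E (Q1 Info) b i + mvec D (Q2 Info) B i + r i)
         = quad_form E (inv_on E Th) (\<lambda>i. b i - (mvec E (PiM K p \<rho> Info Ek) mu i + kappaV K p \<rho> Info Ek r i))
            + quad_form D (inv_on D Gam) (\<lambda>i. B i - (mvec E Psi b i + tauV K p \<rho> Info Ek r i)) + c"
    using gauss_identity[OF hyps, of mu r] unfolding Pi_eq kap_eq tau_eq by blast
  have ThPD: "pos_def_on E Th" by (rule Th_pd[OF hyps])
  have GamPD: "pos_def_on D Gam" by (rule Gam_pd[OF hyps])
  define NE where "NE = (2 * pi) ^ card E * det_on E (inv_on E Info)"
  define NP where "NP = (2 * pi) ^ card P * det_on P (SigmaOmega \<rho> Info)"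
  define NT where "NT = (2 * pi) ^ card E * det_on E Th"
  define NG where "NG = (2 * pi) ^ card D * det_on D Gam"
  define gv where "gv = gauss_density mE (\<lambda>_. 0) (schur E Info) v"
  have NE_pos: "NE > 0" unfolding NE_def by (intro mult_pos_pos zero_less_power pd_det_pos[OF finE inv_pd(1)[OF finE I_pd]]) (auto simp: pi_gt_zero)
  have NP_pos: "NP > 0" unfolding NP_def by (intro mult_pos_pos zero_less_power pd_det_pos[OF finP SO_pd]) (auto simp: pi_gt_zero)
  have NT_pos: "NT > 0" unfolding NT_def by (intro mult_pos_pos zero_less_power pd_det_pos[OF finE ThPD]) (auto simp: pi_gt_zero)
  have NG_pos: "NG > 0" unfolding NG_def by (intro mult_pos_pos zero_less_power pd_det_pos[OF finD GamPD]) (auto simp: pi_gt_zero)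
  have sch_pd: "pos_def_on mE (schur E Info)" unfolding mE_def by (rule schur_pd[OF refl Esub pd])
  have gv_pos: "gv > 0" unfolding gv_def gauss_density_def
    by (intro divide_pos_pos exp_gt_zero real_sqrt_gt_zero mult_pos_pos zero_less_power pd_det_pos[OF finmE sch_pd]) (auto simp: pi_gt_zero)
  define C where "C = exp (- c / 2) * gv * sqrt NT * sqrt NG / (sqrt NE * sqrt NP)"
  have C_pos: "C > 0" unfolding C_def using NE_pos NP_pos NT_pos NG_pos gv_pos by simp
  show "\<exists>C > 0. \<forall>(b :: nat \<Rightarrow> real) (B :: nat \<times> nat \<Rightarrow> real).
          gauss_density E (\<lambda>a. sqrt (real n) * beta a) (inv_on E Info) b
          * gauss_density mE (\<lambda>_. 0) (schur E Info) v
          * gauss_density P (\<lambda>_. 0) (SigmaOmega \<rho> Info)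
              (\<lambda>i. - mvec E (Q1 Info) b i + mvec D (Q2 Info) B i + rV K Ek lam S Z v i)
          = C * gauss_density E
                  (\<lambda>a. mvec E (PiM K p \<rho> Info Ek) (\<lambda>e. sqrt (real n) * beta e) a + kappaV K p \<rho> Info Ek (rV K Ek lam S Z v) a)
                  (ThetaM K p \<rho> Info Ek) b
              * gauss_density D
                  (\<lambda>d. mvec E (PsiM K p \<rho> Info Ek) b d + tauV K p \<rho> Info Ek (rV K Ek lam S Z v) d)
                  (GammaM K p \<rho> Info Ek) B"
  proof (intro exI[of _ C] conjI allI C_pos)
    fix b :: "nat \<Rightarrow> real" and B :: "nat \<times> nat \<Rightarrow> real"
    define q1 where "q1 = quad_form E (inv_on E (inv_on E Info)) (\<lambda>i. b i - mu i)"
    define q2 where "q2 = quad_form P S' (\<lambda>i. - mvec E (Q1 Info) b i + mvec D (Q2 Info) B i + r i)"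
    define q3 where "q3 = quad_form E (inv_on E Th) (\<lambda>i. b i - (mvec E (PiM K p \<rho> Info Ek) mu i + kappaV K p \<rho> Info Ek r i))"
    define q4 where "q4 = quad_form D (inv_on D Gam) (\<lambda>i. B i - (mvec E Psi b i + tauV K p \<rho> Info Ek r i))"
    have qc: "q1 + q2 = q3 + q4 + c" unfolding q1_def q2_def q3_def q4_def by (rule c)
    have g1: "gauss_density E (\<lambda>a. sqrt (real n) * beta a) (inv_on E Info) b = exp (- q1 / 2) / sqrt NE"
      by (simp add: gauss_density_def q1_def NE_def mu_def)
    have g2: "gauss_density P (\<lambda>_. 0) (SigmaOmega \<rho> Info) (\<lambda>i. - mvec E (Q1 Info) b i + mvec D (Q2 Info) B i + rV K Ek lam S Z v i)
        = exp (- q2 / 2) / sqrt NP"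
      by (simp add: gauss_density_def q2_def NP_def S'_eq r_def)
    have g3: "gauss_density E (\<lambda>a. mvec E (PiM K p \<rho> Info Ek) (\<lambda>e. sqrt (real n) * beta e) a + kappaV K p \<rho> Info Ek (rV K Ek lam S Z v) a)
                  (ThetaM K p \<rho> Info Ek) b = exp (- q3 / 2) / sqrt NT"
      by (simp add: gauss_density_def q3_def NT_def Th_def mu_def r_def)
    have g4: "gauss_density D (\<lambda>d. mvec E (PsiM K p \<rho> Info Ek) b d + tauV K p \<rho> Info Ek (rV K Ek lam S Z v) d)
                  (GammaM K p \<rho> Info Ek) B = exp (- q4 / 2) / sqrt NG"
      by (simp add: gauss_density_def q4_def NG_def Gam_def Psi_def r_def)
    have ee: "exp (- q1 / 2) * exp (- q2 / 2) = exp (- c / 2) * (exp (- q3 / 2) * exp (- q4 / 2))"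
    proof -
      have "exp (- q1 / 2) * exp (- q2 / 2) = exp (- q1 / 2 + - q2 / 2)" by (rule exp_add[symmetric])
      also have "- q1 / 2 + - q2 / 2 = - c / 2 + (- q3 / 2 + - q4 / 2)" using qc by simp
      also have "exp (- c / 2 + (- q3 / 2 + - q4 / 2)) = exp (- c / 2) * (exp (- q3 / 2) * exp (- q4 / 2))"
        by (simp only: exp_add)
      finally show ?thesis .
    qed
    have sE: "sqrt NE > 0" and sP: "sqrt NP > 0" and sT: "sqrt NT > 0" and sG: "sqrt NG > 0"
      using NE_pos NP_pos NT_pos NG_pos by auto
    show "gauss_density E (\<lambda>a. sqrt (real n) * beta a) (inv_on E Info) b
          * gauss_density mE (\<lambda>_. 0) (schur E Info) v
          * gauss_density P (\<lambda>_. 0) (SigmaOmega \<rho> Info)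
              (\<lambda>i. - mvec E (Q1 Info) b i + mvec D (Q2 Info) B i + rV K Ek lam S Z v i)
          = C * gauss_density E
                  (\<lambda>a. mvec E (PiM K p \<rho> Info Ek) (\<lambda>e. sqrt (real n) * beta e) a + kappaV K p \<rho> Info Ek (rV K Ek lam S Z v) a)
                  (ThetaM K p \<rho> Info Ek) b
              * gauss_density D
                  (\<lambda>d. mvec E (PsiM K p \<rho> Info Ek) b d + tauV K p \<rho> Info Ek (rV K Ek lam S Z v) d)
                  (GammaM K p \<rho> Info Ek) B"
      unfolding g1 g2 g3 g4 gv_def[symmetric] C_def
      using ee sE sP sT sG by (simp add: field_simps)
  qed
qed

lemma stack_eq_iff: "stack K f = stack K g \<longleftrightarrow> (\<forall>k\<in>{1..K}. f k = g k)"
proof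
  assume h: "stack K f = stack K g"
  show "\<forall>k\<in>{1..K}. f k = g k"
  proof (intro ballI ext)
    fix k j assume "k \<in> {1..K}"
    then show "f k j = g k j" using fun_cong[OF h, of "(k,j)"] by (simp add: stack_def)
  qed
next
  assume "\<forall>k\<in>{1..K}. f k = g k"
  then show "stack K f = stack K g" by (auto simp: stack_def fun_eq_iff)
qed

lemma active_Smap: "active p \<beta> = {j. Smap p \<beta> j \<noteq> None}"
  by (auto simp: Smap_def Bmap_def)

lemma part1:
  fixes bh :: "nat \<Rightarrow> 'w \<Rightarrow> nat \<Rightarrow> real" and Zw :: "nat \<Rightarrow> 'w \<Rightarrow> nat \<rightharpoonup> real"
  assumes npos: "n > 0"
  shows "{w. \<forall>k\<in>{1..K}. active p (bh k w) = active p (bh k w0)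
            \<and> Smap p (bh k w) = Smap p (bh k w0)
            \<and> Zw k w = Zw k w0}
     = {w. (\<lambda>i. map_option sgn (map_option (\<lambda>t. sqrt (real n) * t) (stack K (\<lambda>k. Bmap p (bh k w)) i)))
              = stack K (\<lambda>k. Smap p (bh k w0))
           \<and> stack K (\<lambda>k. Zw k w) = stack K (\<lambda>k. Zw k w0)}"
proof -
  have sg: "sgn (sqrt (real n) * t) = sgn t" for t
    using npos by (simp add: sgn_mult)
  have eq: "(\<lambda>i. map_option sgn (map_option (\<lambda>t. sqrt (real n) * t) (stack K (\<lambda>k. Bmap p (bh k w)) i)))
      = stack K (\<lambda>k. Smap p (bh k w))" for w
    by (auto simp: fun_eq_iff stack_def Smap_def option.map_comp comp_def sg)
  show ?thesis unfolding eq stack_eq_iff using active_Smap by auto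
qed

theorem theorem4p3:
  fixes A :: "real \<Rightarrow> real"           \<comment> \<open>cumulant function\<close>
    and n p K :: nat
    and Cset :: "nat \<Rightarrow> nat set"       \<comment> \<open>machine index sets C^(0),...,C^(K)\<close>
    and lam :: "nat \<Rightarrow> real"           \<comment> \<open>diagonal of \<Lambda>\<close>
    and xs :: "'w \<Rightarrow> nat \<Rightarrow> nat \<Rightarrow> real"  \<comment> \<open>random design, rows x_i\<close>
    and ys :: "'w \<Rightarrow> nat \<Rightarrow> real"       \<comment> \<open>random responses\<close>
    and bh :: "nat \<Rightarrow> 'w \<Rightarrow> nat \<Rightarrow> real" \<comment> \<open>local Lasso solutions\<close>
    and w0 :: 'w                        \<comment> \<open>observed outcome\<close>
    and Info :: "nat \<Rightarrow> nat \<Rightarrow> real"    \<comment> \<open>the matrix \<I>\<close>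
    and beta :: "nat \<Rightarrow> real"          \<comment> \<open>\<beta>_{E,n} (read on E)\<close>
  assumes K_pos: "K \<ge> 1"
    and C_sub: "\<forall>k\<le>K. Cset k \<subseteq> {..<n}"
    and C_cover: "(\<Union>k\<le>K. Cset k) = {..<n}"
    and C_disj: "\<forall>k\<le>K. \<forall>k'\<le>K. k \<noteq> k' \<longrightarrow> Cset k \<inter> Cset k' = {}"
    and C_ne: "\<forall>k\<le>K. Cset k \<noteq> {}"
    and lam_pos: "\<forall>j<p. lam j > 0"
    and lasso: "\<forall>w. \<forall>k\<in>{1..K}. (\<forall>j\<ge>p. bh k w j = 0) \<and>
                  (\<forall>b. (\<forall>j\<ge>p. b j = 0) \<longrightarrow>
                     lasso_obj A n p (Cset k) lam (xs w) (ys w) (bh k w)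
                       \<le> lasso_obj A n p (Cset k) lam (xs w) (ys w) b)"
    and Info_pd: "pos_def_on {..<p} Info"
  shows
    "{w. \<forall>k\<in>{1..K}. active p (bh k w) = active p (bh k w0)
            \<and> Smap p (bh k w) = Smap p (bh k w0)
            \<and> Zmap p lam (bh k w) (neg_grad A n p (Cset k) (xs w) (ys w) (bh k w))
              = Zmap p lam (bh k w0) (neg_grad A n p (Cset k) (xs w0) (ys w0) (bh k w0))}
     = {w. (\<lambda>i. map_option sgn (map_option (\<lambda>t. sqrt (real n) * t) (stack K (\<lambda>k. Bmap p (bh k w)) i)))
              = stack K (\<lambda>k. Smap p (bh k w0))
           \<and> stack K (\<lambda>k. Zmap p lam (bh k w) (neg_grad A n p (Cset k) (xs w) (ys w) (bh k w)))
              = stack K (\<lambda>k. Zmap p lam (bh k w0) (neg_grad A n p (Cset k) (xs w0) (ys w0) (bh k w0)))}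
   \<and>
    (let \<rho> = (\<lambda>k. prop_of n (Cset k));
         Ek = (\<lambda>k. active p (bh k w0));
         E = (\<Union>k\<in>{1..K}. Ek k);
         mE = {..<p} - E;
         D = Dset K Ek;
         P = PKset K p;
         S = stack K (\<lambda>k. Smap p (bh k w0));
         Z = stack K (\<lambda>k. Zmap p lam (bh k w0) (neg_grad A n p (Cset k) (xs w0) (ys w0) (bh k w0)))
     in \<forall>v :: nat \<Rightarrow> real. \<exists>C > 0. \<forall>(b :: nat \<Rightarrow> real) (B :: nat \<times> nat \<Rightarrow> real).
          let r = rV K Ek lam S Z v in
          gauss_density E (\<lambda>a. sqrt (real n) * beta a) (inv_on E Info) b
          * gauss_density mE (\<lambda>_. 0) (schur E Info) v
          * gauss_density P (\<lambda>_. 0) (SigmaOmega \<rho> Info)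
              (\<lambda>i. - mvec E (Q1 Info) b i + mvec D (Q2 Info) B i + r i)
          = C * gauss_density E
                  (\<lambda>a. mvec E (PiM K p \<rho> Info Ek) (\<lambda>e. sqrt (real n) * beta e) a + kappaV K p \<rho> Info Ek r a)
                  (ThetaM K p \<rho> Info Ek) b
              * gauss_density D
                  (\<lambda>d. mvec E (PsiM K p \<rho> Info Ek) b d + tauV K p \<rho> Info Ek r d)
                  (GammaM K p \<rho> Info Ek) B)"
proof -
  have n0: "Cset 0 \<noteq> {}" using C_ne by simp
  have s0: "Cset 0 \<subseteq> {..<n}" using C_sub by simp
  have npos: "n > 0" using n0 s0 by (cases "n = 0") auto
  have finC: "\<forall>k\<le>K. finite (Cset k)" using C_sub finite_subset by blast
  have cardsum: "(\<Sum>k\<le>K. card (Cset k)) = n"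
  proof -
    have "card (\<Union>k\<le>K. Cset k) = (\<Sum>k\<le>K. card (Cset k))"
      by (rule card_UN_disjoint) (use finC C_disj in auto)
    then show ?thesis using C_cover by simp
  qed
  have splitK: "(\<Sum>k\<le>K. card (Cset k)) = card (Cset 0) + (\<Sum>k\<in>{1..K}. card (Cset k))"
  proof -
    have "{..K} = insert 0 {1..K}" by auto
    then show ?thesis by simp
  qed
  have c0pos: "card (Cset 0) > 0" using n0 finC by (simp add: card_gt_0_iff)
  have rpos: "\<forall>k\<in>{1..K}. prop_of n (Cset k) > 0"
    using C_ne finC npos by (auto simp: prop_of_def card_gt_0_iff)
  have lt: "(\<Sum>k\<in>{1..K}. card (Cset k)) < n" using cardsum splitK c0pos by linarith
  have rsum: "(\<Sum>k\<in>{1..K}. prop_of n (Cset k)) < 1"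
  proof -
    have "(\<Sum>k\<in>{1..K}. prop_of n (Cset k)) = real (\<Sum>k\<in>{1..K}. card (Cset k)) / real n"
      by (simp add: prop_of_def sum_divide_distrib)
    moreover have "real (\<Sum>k\<in>{1..K}. card (Cset k)) / real n < 1"
    proof -
      have lt': "real (\<Sum>k\<in>{1..K}. card (Cset k)) < real n" using lt by (simp only: of_nat_less_iff)
      then show ?thesis using npos by (simp add: field_simps del: of_nat_sum)
    qed
    ultimately show ?thesis by simp
  qed
  have Ek_sub: "\<forall>k\<in>{1..K}. active p (bh k w0) \<subseteq> {..<p}" by (auto simp: active_def)
  show ?thesis
    apply (rule conjI)
     apply (rule part1[OF npos, where Zw = "\<lambda>k w. Zmap p lam (bh k w) (neg_grad A n p (Cset k) (xs w) (ys w) (bh k w))"])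
    apply (unfold Let_def)
    apply (rule main2[OF _ _ _ _ Ek_sub Info_pd rpos rsum])
       apply (rule refl)+
    done
qed

end
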